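(* Let $b$ be a connected transient graph over a countable set $X$ satisfying the ellipticity condition (E) for some $E>0$, and suppose the Green's function is proper. Fix $o\in X$, a metric $\varrho$ on $X$, and write $\|x\|=\varrho(x,o)$. Assume there are constants $C>0$ and $p>0$ with $$w_G(x)\le \frac{C}{1+\|x\|^p}\qquad\text{for all }x\in X.$$ Let $\tilde w:X\to(0,\infty)$ be such that for some $\lambda>0$ and some finite set $K\subseteq X$, $$\tilde w(x)\ge (1+\lambda)\frac{C}{1+\|x\|^p}\qquad\text{for all }x\in X\setminus K.$$ Then $\tilde w$ is not a Hardy weight.
   Context: A graph over a countable set $X$ is a symmetric map $b:X\times X\to[0,\infty)$ with zero diagonal; write $x\sim y$ if $b(x,y)>0$. It is connected if any two vertices are joined by a finite path $x=x_0\sim x_1\sim\dots\sim x_n=y$. Ellipticity condition (E): $b(x,y)\ge E\sum_{z\in X}b(x,z)$ for all $x\sim y$. Define $Lf(x)=\sum_{y}b(x,y)(f(x)-f(y))$ and, for $f$ with finite support, $Q(f)=\sum_{x,y\in X}b(x,y)(f(x)-f(y))^2$. Let $L$ also denote the Friedrichs extension of $L|_{C_c(X)}$ in $\ell^2(X)$. The Green's function is $G(x,y)=\lim_{\alpha\downarrow 0}((L+\alpha)^{-1}1_x)(y)\in[0,\infty]$; the graph is transient if it is finite. Write $G(x)=G(o,x)$. $G$ is proper if for every $\varepsilon>0$ the set $\{x: G(x)\ge\varepsilon\}$ is finite. The weight $w_G$ is defined by $w_G(x)=2\,(L G^{1/2})(x)/G(x)^{1/2}$, equivalently $w_G(x)=\frac{1_{\{o\}}(x)}{G(o)}+\frac{1}{G(x)}\sum_{y}b(x,y)\big(G(x)^{1/2}-G(y)^{1/2}\big)^2$.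 A function $w:X\to[0,\infty)$ is a Hardy weight if $Q(f)\ge\sum_{x}w(x)f(x)^2$ for all finitely supported $f:X\to\mathbb R$. *)

theory Defs
  imports "HOL-Analysis.Analysis"
begin

definition graph :: "('a \<Rightarrow> 'a \<Rightarrow> real) \<Rightarrow> bool" where
  "graph b \<longleftrightarrow> (\<forall>x y. b x y \<ge> 0 \<and> b x y = b y x) \<and> (\<forall>x. b x x = 0)"

definition connected_graph :: "('a \<Rightarrow> 'a \<Rightarrow> real) \<Rightarrow> bool" where
  "connected_graph b \<longleftrightarrow> (\<forall>x y. (\<lambda>u v. b u v > 0)\<^sup>*\<^sup>* x y)"

text \<open>Ellipticity (E): b(x,y) >= E * sum_z b(x,z) for x ~ y (the sum being finite,
  as it must be for the inequality to hold in [0,\<infinity>]).\<close>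
definition ellipticity :: "('a \<Rightarrow> 'a \<Rightarrow> real) \<Rightarrow> real \<Rightarrow> bool" where
  "ellipticity b E \<longleftrightarrow> (\<forall>x y. b x y > 0 \<longrightarrow>
      (b x) summable_on UNIV \<and> b x y \<ge> E * (\<Sum>\<^sub>\<infinity>z. b x z))"

definition fin_supp :: "('a \<Rightarrow> real) \<Rightarrow> bool" where
  "fin_supp f \<longleftrightarrow> finite {x. f x \<noteq> 0}"

definition energy :: "('a \<Rightarrow> 'a \<Rightarrow> real) \<Rightarrow> ('a \<Rightarrow> real) \<Rightarrow> real" where
  "energy b f = (\<Sum>\<^sub>\<infinity>(x,y). b x y * (f x - f y)^2)"

definition energy_summable :: "('a \<Rightarrow> 'a \<Rightarrow> real) \<Rightarrow> ('a \<Rightarrow> real) \<Rightarrow> bool" where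
  "energy_summable b f \<longleftrightarrow> (\<lambda>(x,y). b x y * (f x - f y)^2) summable_on UNIV"

definition energy_bil :: "('a \<Rightarrow> 'a \<Rightarrow> real) \<Rightarrow> ('a \<Rightarrow> real) \<Rightarrow> ('a \<Rightarrow> real) \<Rightarrow> real" where
  "energy_bil b f g = (\<Sum>\<^sub>\<infinity>(x,y). b x y * (f x - f y) * (g x - g y))"

definition in_l2 :: "('a \<Rightarrow> real) \<Rightarrow> bool" where
  "in_l2 f \<longleftrightarrow> (\<lambda>x. (f x)^2) summable_on UNIV"

definition l2sq :: "('a \<Rightarrow> real) \<Rightarrow> real" where
  "l2sq f = (\<Sum>\<^sub>\<infinity>x. (f x)^2)"

text \<open>Form domain of the Friedrichs extension of L on C_c(X): the closure of the finitely
  supported functions in l^2 with respect to the norm (q(u) + \<parallel>u\<parallel>^2)^(1/2), q = Q/2.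
  (The closed form agrees with the formal energy on this domain.)\<close>
definition form_domain :: "('a \<Rightarrow> 'a \<Rightarrow> real) \<Rightarrow> ('a \<Rightarrow> real) set" where
  "form_domain b = {u. in_l2 u \<and> energy_summable b u \<and>
     (\<forall>\<epsilon>::real. \<epsilon> > 0 \<longrightarrow> (\<exists>\<phi>. fin_supp \<phi> \<and> energy_summable b (\<lambda>x. u x - \<phi> x) \<and>
        energy b (\<lambda>x. u x - \<phi> x) / 2 + l2sq (\<lambda>x. u x - \<phi> x) < \<epsilon>))}"

text \<open>((L+\<alpha>)^{-1} 1_{x0}) for the Friedrichs extension L, given by the weak equation
  q(u,\<phi>) + \<alpha> <u,\<phi>> = <1_{x0},\<phi>> for all \<phi> in C_c(X), u in the form domain,
  where q(f,g) = (1/2) sum_{x,y} b(x,y)(f x - f y)(g x - g y) is the form of L.\<close>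
definition resolvent :: "('a \<Rightarrow> 'a \<Rightarrow> real) \<Rightarrow> real \<Rightarrow> 'a \<Rightarrow> ('a \<Rightarrow> real)" where
  "resolvent b \<alpha> x0 = (THE u. u \<in> form_domain b \<and>
     (\<forall>\<phi>. fin_supp \<phi> \<longrightarrow> energy_bil b u \<phi> / 2 + \<alpha> * (\<Sum>\<^sub>\<infinity>y. u y * \<phi> y) = \<phi> x0))"

definition green :: "('a \<Rightarrow> 'a \<Rightarrow> real) \<Rightarrow> 'a \<Rightarrow> 'a \<Rightarrow> ereal" where
  "green b x y = Lim (at_right 0) (\<lambda>\<alpha>. ereal (resolvent b \<alpha> x y))"

definition transient :: "('a \<Rightarrow> 'a \<Rightarrow> real) \<Rightarrow> bool" where
  "transient b \<longleftrightarrow> (\<forall>x y. green b x y < \<infinity>)"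

definition green_proper :: "('a \<Rightarrow> 'a \<Rightarrow> real) \<Rightarrow> 'a \<Rightarrow> bool" where
  "green_proper b x0 \<longleftrightarrow> (\<forall>\<epsilon>::real. \<epsilon> > 0 \<longrightarrow> finite {x. green b x0 x \<ge> ereal \<epsilon>})"

definition lap :: "('a \<Rightarrow> 'a \<Rightarrow> real) \<Rightarrow> ('a \<Rightarrow> real) \<Rightarrow> 'a \<Rightarrow> real" where
  "lap b f x = (\<Sum>\<^sub>\<infinity>y. b x y * (f x - f y))"

definition wG :: "('a \<Rightarrow> 'a \<Rightarrow> real) \<Rightarrow> 'a \<Rightarrow> 'a \<Rightarrow> real" where
  "wG b x0 x = 2 * lap b (\<lambda>y. sqrt (real_of_ereal (green b x0 y))) x
              / sqrt (real_of_ereal (green b x0 x))"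

definition hardy_weight :: "('a \<Rightarrow> 'a \<Rightarrow> real) \<Rightarrow> ('a \<Rightarrow> real) \<Rightarrow> bool" where
  "hardy_weight b w \<longleftrightarrow> (\<forall>x. w x \<ge> 0) \<and>
     (\<forall>f. fin_supp f \<longrightarrow> (\<Sum>\<^sub>\<infinity>x. w x * (f x)^2) \<le> energy b f)"

definition is_metric :: "('a \<Rightarrow> 'a \<Rightarrow> real) \<Rightarrow> bool" where
  "is_metric \<rho> \<longleftrightarrow> (\<forall>x y. \<rho> x y = 0 \<longleftrightarrow> x = y) \<and> (\<forall>x y. \<rho> x y = \<rho> y x)
     \<and> (\<forall>x y z. \<rho> x z \<le> \<rho> x y + \<rho> y z)"

end

theory Submission
  imports Defs
begin


lemma ln_diff_le: fixes a c :: real shows "0 < c \<Longrightarrow> c \<le> a \<Longrightarrow> ln a - ln c \<le> (a - c) / c"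
proof -
  assume c: "0 < c" "c \<le> a"
  have "ln (a / c) \<le> a / c - 1" using c by (intro ln_le_minus_one) (simp add: divide_pos_pos)
  then show ?thesis using c by (simp add: ln_div diff_divide_distrib)
qed

lemma H1_aux:
  fixes a c E :: real
  assumes c: "0 < c" "c \<le> a" and E: "0 < E" "E * a \<le> c"
  shows "(a - c) * (ln a - ln c) \<le> (4 / E) * (sqrt a - sqrt c)^2"
proof -
  have a: "0 < a" using c by simp
  have l: "ln a - ln c \<le> (a - c) / c" by (rule ln_diff_le[OF c])
  have "(a - c) * (ln a - ln c) \<le> (a - c) * ((a - c) / c)"
    using l c by (intro mult_left_mono) auto
  also have "\<dots> = (a - c)^2 / c" by (simp add: power2_eq_square)
  also have "\<dots> \<le> (4 / E) * (sqrt a - sqrt c)^2"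
  proof -
    have sa: "sqrt a * sqrt a = a" "sqrt c * sqrt c = c" using a c by auto
    have "a - c = (sqrt a - sqrt c) * (sqrt a + sqrt c)" using sa by (simp add: algebra_simps)
    then have eq: "(a - c)^2 = (sqrt a - sqrt c)^2 * (sqrt a + sqrt c)^2" by (simp add: power_mult_distrib)
    have "(sqrt a + sqrt c)^2 \<le> 4 * a"
    proof -
      have "sqrt c \<le> sqrt a" using c by simp
      then have "sqrt a + sqrt c \<le> 2 * sqrt a" by simp
      moreover have "0 \<le> sqrt a + sqrt c" using a c by simp
      ultimately have "(sqrt a + sqrt c)^2 \<le> (2 * sqrt a)^2" by (rule power_mono)
      then show ?thesis using a by (simp add: power_mult_distrib)
    qed
    also have "\<dots> \<le> 4 * c / E" using E by (simp add: field_simps)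
    finally have "(sqrt a + sqrt c)^2 / c \<le> 4 / E" using c E by (simp add: field_simps)
    then have "(sqrt a - sqrt c)^2 * ((sqrt a + sqrt c)^2 / c) \<le> (sqrt a - sqrt c)^2 * (4 / E)"
      by (intro mult_left_mono) auto
    then show ?thesis unfolding eq by (simp add: mult.commute)
  qed
  finally show ?thesis .
qed

lemma H1:
  fixes a c E :: real
  assumes "0 < a" "0 < c" "0 < E" "E * a \<le> c" "E * c \<le> a"
  shows "(a - c) * (ln a - ln c) \<le> (4 / E) * (sqrt a - sqrt c)^2"
proof (cases "c \<le> a")
  case True then show ?thesis using H1_aux assms by blast
next
  case False
  then have "(c - a) * (ln c - ln a) \<le> (4 / E) * (sqrt c - sqrt a)^2"
    using H1_aux[of a c E] assms by simp
  then show ?thesis by (simp add: algebra_simps power2_commute)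
qed

lemma H0: fixes a c :: real shows "0 < a \<Longrightarrow> 0 < c \<Longrightarrow> 0 \<le> (a - c) * (ln a - ln c)"
proof (cases "c \<le> a")
  case True
  assume "0 < a" "0 < c"
  then show ?thesis using True by (intro mult_nonneg_nonneg) auto
next
  case False
  assume "0 < a" "0 < c"
  then show ?thesis using False by (intro mult_nonpos_nonpos) auto
qed

lemma H2_aux:
  fixes a c E :: real
  assumes c: "0 < c" "c \<le> a" and E: "0 < E" "E * a \<le> c"
  shows "sqrt (a * c) * (ln a - ln c)^2 \<le> (1 / E) * ((a - c) * (ln a - ln c))"
proof -
  have a: "0 < a" using c by simp
  have l: "ln a - ln c \<le> (a - c) / c" by (rule ln_diff_le[OF c])
  have l0: "0 \<le> ln a - ln c" using c a by simp
  have "sqrt (a * c) * (ln a - ln c)^2 = (sqrt (a * c) * (ln a - ln c)) * (ln a - ln c)"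
    by (simp add: power2_eq_square)
  also have "\<dots> \<le> (sqrt (a * c) * ((a - c) / c)) * (ln a - ln c)"
    using l l0 a c by (intro mult_right_mono mult_left_mono) auto
  also have "sqrt (a * c) \<le> a"
  proof -
    have "sqrt (a * c) \<le> sqrt (a * a)" using c a by (intro real_sqrt_le_mono mult_left_mono) auto
    then show ?thesis using a by simp
  qed
  then have "(sqrt (a * c) * ((a - c) / c)) * (ln a - ln c) \<le> (a * ((a - c) / c)) * (ln a - ln c)"
    using c l0 by (intro mult_right_mono) (auto intro!: mult_right_mono)
  also have "\<dots> = (a / c) * ((a - c) * (ln a - ln c))" by simp
  also have "\<dots> \<le> (1 / E) * ((a - c) * (ln a - ln c))"
  proof (rule mult_right_mono)
    show "a / c \<le> 1 / E" using E c by (simp add: field_simps)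
    show "0 \<le> (a - c) * (ln a - ln c)" using c l0 by simp
  qed
  finally show ?thesis .
qed

lemma H2:
  fixes a c E :: real
  assumes "0 < a" "0 < c" "0 < E" "E * a \<le> c" "E * c \<le> a"
  shows "sqrt (a * c) * (ln a - ln c)^2 \<le> (1 / E) * ((a - c) * (ln a - ln c))"
proof (cases "c \<le> a")
  case True then show ?thesis using H2_aux assms by blast
next
  case False
  then have "sqrt (c * a) * (ln c - ln a)^2 \<le> (1 / E) * ((c - a) * (ln c - ln a))"
    using H2_aux[of a c E] assms by simp
  then show ?thesis by (simp add: algebra_simps power2_commute)
qed



lemma has_sum_fin_zero:
  assumes "finite B" "\<And>x. x \<notin> B \<Longrightarrow> f x = 0"
  shows "infsum f UNIV = sum f B" "f summable_on UNIV"
proof -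
  have "(f has_sum sum f B) UNIV" by (rule has_sum_finite_neutralI) (use assms in auto)
  then show "infsum f UNIV = sum f B" "f summable_on UNIV"
    by (auto simp: has_sum_iff)
qed

lemma summable_diff:
  fixes f g :: "'i \<Rightarrow> real"
  assumes "f summable_on A" "g summable_on A"
  shows "(\<lambda>x. f x - g x) summable_on A" "infsum (\<lambda>x. f x - g x) A = infsum f A - infsum g A"
proof -
  have u: "(\<lambda>x. - g x) summable_on A" using summable_on_uminus assms(2) by blast
  show "(\<lambda>x. f x - g x) summable_on A"
    using summable_on_add[OF assms(1) u] by simp
  show "infsum (\<lambda>x. f x - g x) A = infsum f A - infsum g A"
    using infsum_add[OF assms(1) u] infsum_uminus[of g A] by simp
qed

lemma summable_cmult:
  fixes f :: "'i \<Rightarrow> real"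
  assumes "f summable_on A"
  shows "(\<lambda>x. c * f x) summable_on A" "infsum (\<lambda>x. c * f x) A = c * infsum f A"
  using summable_on_cmult_right[OF assms] infsum_cmult_right[of c f A] assms by auto

lemma sq_generic:
  fixes c A B :: "'i \<Rightarrow> real"
  assumes sA: "(\<lambda>i. c i * (A i)^2) summable_on UNIV"
    and sB: "(\<lambda>i. c i * (B i)^2) summable_on UNIV"
    and c: "\<And>i. c i \<ge> 0"
  shows "(\<lambda>i. c i * A i * B i) summable_on UNIV" (is ?s1)
    and "(\<lambda>i. c i * (A i - B i)^2) summable_on UNIV" (is ?s2)
    and "(\<Sum>\<^sub>\<infinity>i. c i * (A i - B i)^2) = (\<Sum>\<^sub>\<infinity>i. c i * (A i)^2) - 2 * (\<Sum>\<^sub>\<infinity>i. c i * A i * B i) + (\<Sum>\<^sub>\<infinity>i. c i * (B i)^2)" (is ?e)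
    and "2 * (\<Sum>\<^sub>\<infinity>i. c i * A i * B i) \<le> (\<Sum>\<^sub>\<infinity>i. c i * (A i)^2) + (\<Sum>\<^sub>\<infinity>i. c i * (B i)^2)" (is ?cs)
    and "(\<Sum>\<^sub>\<infinity>i. c i * (A i - B i)^2) \<le> 2 * (\<Sum>\<^sub>\<infinity>i. c i * (A i)^2) + 2 * (\<Sum>\<^sub>\<infinity>i. c i * (B i)^2)" (is ?tr)
proof -
  have sAB: "(\<lambda>i. c i * (A i)^2 + c i * (B i)^2) summable_on UNIV"
    by (rule summable_on_add[OF sA sB])
  have bnd: "\<bar>c i * A i * B i\<bar> \<le> c i * (A i)^2 + c i * (B i)^2" for i
  proof -
    have "0 \<le> (\<bar>A i\<bar> - \<bar>B i\<bar>)^2" by simp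
    then have "2 * \<bar>A i * B i\<bar> \<le> (A i)^2 + (B i)^2"
      by (simp add: power2_eq_square abs_mult algebra_simps abs_mult_self_eq)
    then have "\<bar>A i * B i\<bar> \<le> (A i)^2 + (B i)^2" by (smt (verit) abs_ge_zero)
    then have "c i * \<bar>A i * B i\<bar> \<le> c i * ((A i)^2 + (B i)^2)" using c by (rule mult_left_mono)
    then show ?thesis using c by (simp add: abs_mult distrib_left mult.assoc)
  qed
  have s0: "(\<lambda>i. c i * A i * B i + (c i * (A i)^2 + c i * (B i)^2)) summable_on UNIV"
  proof (rule summable_on_comparison_test[OF summable_cmult(1)[OF sAB, of 2]])
    fix i
    show "c i * A i * B i + (c i * (A i)^2 + c i * (B i)^2) \<le> 2 * (c i * (A i)^2 + c i * (B i)^2)"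
      "0 \<le> c i * A i * B i + (c i * (A i)^2 + c i * (B i)^2)"
      using bnd[of i] by (simp_all add: abs_le_iff)
  qed
  show s1: ?s1 using summable_diff(1)[OF s0 sAB] by simp
  have eq: "c i * (A i - B i)^2 = (c i * (A i)^2 - 2 * (c i * A i * B i)) + c i * (B i)^2" for i
    by (simp add: power2_eq_square algebra_simps)
  have s3: "(\<lambda>i. c i * (A i)^2 - 2 * (c i * A i * B i)) summable_on UNIV"
    by (rule summable_diff(1)[OF sA summable_cmult(1)[OF s1]])
  show ?s2 unfolding eq by (rule summable_on_add[OF s3 sB])
  show ?e unfolding eq
    by (simp add: infsum_add[OF s3 sB] summable_diff(2)[OF sA summable_cmult(1)[OF s1]]
        summable_cmult(2)[OF s1])
  have "(\<Sum>\<^sub>\<infinity>i. c i * (A i - B i)^2) \<ge> 0" using c by (intro infsum_nonneg) simp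
  then show ?cs using \<open>?e\<close> by simp
  have "(\<Sum>\<^sub>\<infinity>i. c i * (A i + B i)^2) \<ge> 0" using c by (intro infsum_nonneg) simp
  have eq2: "c i * (A i + B i)^2 = (c i * (A i)^2 + 2 * (c i * A i * B i)) + c i * (B i)^2" for i
    by (simp add: power2_eq_square algebra_simps)
  have s4: "(\<lambda>i. c i * (A i)^2 + 2 * (c i * A i * B i)) summable_on UNIV"
    by (rule summable_on_add[OF sA summable_cmult(1)[OF s1]])
  have "(\<Sum>\<^sub>\<infinity>i. c i * (A i + B i)^2) = (\<Sum>\<^sub>\<infinity>i. c i * (A i)^2) + 2 * (\<Sum>\<^sub>\<infinity>i. c i * A i * B i) + (\<Sum>\<^sub>\<infinity>i. c i * (B i)^2)"
    unfolding eq2 by (simp add: infsum_add[OF s4 sB] infsum_add[OF sA summable_cmult(1)[OF s1]]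
        summable_cmult(2)[OF s1])
  then show ?tr using \<open>?e\<close> \<open>(\<Sum>\<^sub>\<infinity>i. c i * (A i + B i)^2) \<ge> 0\<close> by simp
qed

lemma two_sums_bound:
  fixes f :: "'i \<Rightarrow> real" and g :: "'j \<Rightarrow> real"
  assumes f0: "\<And>x. f x \<ge> 0" and g0: "\<And>x. g x \<ge> 0" and c1: "c1 > 0" and c2: "c2 > 0"
    and B: "\<And>F H. finite F \<Longrightarrow> finite H \<Longrightarrow> c1 * sum f F + c2 * sum g H \<le> B"
  shows "f summable_on UNIV" "g summable_on UNIV" "c1 * infsum f UNIV + c2 * infsum g UNIV \<le> B"
proof -
  have bf: "sum f F \<le> B / c1" if "finite F" for F
    using B[OF that finite.emptyI] c1 by (simp add: field_simps)
  have bg: "sum g H \<le> B / c2" if "finite H" for H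
    using B[OF finite.emptyI that] c2 by (simp add: field_simps)
  show sf: "f summable_on UNIV"
    by (rule nonneg_bdd_above_summable_on) (use f0 bf in \<open>auto intro!: bdd_aboveI\<close>)
  show sg: "g summable_on UNIV"
    by (rule nonneg_bdd_above_summable_on) (use g0 bg in \<open>auto intro!: bdd_aboveI\<close>)
  have "infsum f UNIV \<le> (B - c2 * sum g H) / c1" if "finite H" for H
    by (rule infsum_le_finite_sums[OF sf]) (use B[OF _ that] c1 in \<open>auto simp: field_simps\<close>)
  then have "c2 * sum g H \<le> B - c1 * infsum f UNIV" if "finite H" for H
    using that c1 by (simp add: field_simps)
  then have "infsum g UNIV \<le> (B - c1 * infsum f UNIV) / c2"
    by (intro infsum_le_finite_sums[OF sg]) (use c2 in \<open>auto simp: field_simps\<close>)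
  then show "c1 * infsum f UNIV + c2 * infsum g UNIV \<le> B" using c2 by (simp add: field_simps)
qed

locale lfg =
  fixes b :: "'a \<Rightarrow> 'a \<Rightarrow> real" and E :: real
  assumes gr: "graph b" and Epos: "E > 0" and ell: "ellipticity b E"
begin

definition nb where "nb x = {y. b x y > 0}"
definition dg where "dg x = sum (b x) (nb x)"
definition lp where "lp f x = (\<Sum>y\<in>nb x. b x y * (f x - f y))"

lemma bnn: "b x y \<ge> 0" using gr by (auto simp: graph_def)
lemma bsym: "b x y = b y x" using gr by (auto simp: graph_def)
lemma bdiag: "b x x = 0" using gr by (auto simp: graph_def)

lemma nb_iff: "y \<in> nb x \<longleftrightarrow> b x y \<noteq> 0"
  using bnn[of x y] by (auto simp: nb_def)

lemma nb_sym: "y \<in> nb x \<longleftrightarrow> x \<in> nb y"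
  by (auto simp: nb_def bsym)

lemma b_zero: "y \<notin> nb x \<Longrightarrow> b x y = 0"
  using nb_iff by blast

lemma fin_nb: "finite (nb x)"
proof (cases "nb x = {}")
  case True then show ?thesis by simp
next
  case False
  then obtain y0 where y0: "b x y0 > 0" by (auto simp: nb_def)
  have sm: "(b x) summable_on UNIV" and el: "\<And>y. b x y > 0 \<Longrightarrow> b x y \<ge> E * (\<Sum>\<^sub>\<infinity>z. b x z)"
    using ell y0 by (auto simp: ellipticity_def)
  define D where "D = (\<Sum>\<^sub>\<infinity>z. b x z)"
  have "sum (b x) {y0} \<le> D" unfolding D_def
    by (rule finite_sum_le_infsum[OF sm]) (auto simp: bnn)
  with y0 have Dpos: "D > 0" by simp
  have "card G \<le> 1 / E" if "G \<subseteq> nb x" "finite G" for G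
  proof -
    have "real (card G) * (E * D) = (\<Sum>y\<in>G. E * D)" by simp
    also have "\<dots> \<le> sum (b x) G"
      using that el by (intro sum_mono) (auto simp: nb_def D_def)
    also have "\<dots> \<le> D" unfolding D_def
      by (rule finite_sum_le_infsum[OF sm]) (use that in \<open>auto simp: bnn\<close>)
    finally have "real (card G) * E \<le> 1" using Dpos
      by (metis mult.assoc mult_le_cancel_right2)
    then show ?thesis using Epos by (simp add: field_simps)
  qed
  then show ?thesis
    using finite_if_finite_subsets_card_bdd[of "nb x" "nat \<lfloor>1/E\<rfloor>"]
    by (metis le_nat_floor of_nat_le_iff)
qed

lemma infsum_b: "(\<Sum>\<^sub>\<infinity>z. b x z) = dg x"
  unfolding dg_def by (rule has_sum_fin_zero[OF fin_nb]) (simp add: b_zero)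

lemma ellE: "b x y > 0 \<Longrightarrow> b x y \<ge> E * dg x"
  using ell by (auto simp: ellipticity_def infsum_b)

lemma dg_nn: "dg x \<ge> 0" unfolding dg_def by (intro sum_nonneg bnn)

definition nbhd where "nbhd S = S \<union> (\<Union>x\<in>S. nb x)"

lemma fin_nbhd: "finite S \<Longrightarrow> finite (nbhd S)"
  unfolding nbhd_def using fin_nb by auto

lemma nbhd_sub: "S \<subseteq> nbhd S" "x \<in> S \<Longrightarrow> nb x \<subseteq> nbhd S"
  unfolding nbhd_def by auto

lemma pair_sum:
  assumes "finite S" "\<And>x y. t x y \<noteq> 0 \<Longrightarrow> b x y \<noteq> 0 \<and> (x \<in> S \<or> y \<in> S)"
  shows "(\<Sum>\<^sub>\<infinity>(x,y). t x y) = (\<Sum>x\<in>nbhd S. \<Sum>y\<in>nbhd S. t x y)"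
    and "(\<lambda>(x,y). t x y) summable_on UNIV"
proof -
  have z: "(\<lambda>(x,y). t x y) p = 0" if "p \<notin> nbhd S \<times> nbhd S" for p
  proof (cases p)
    case (Pair x y)
    show ?thesis
    proof (rule ccontr)
      assume "(\<lambda>(x,y). t x y) p \<noteq> 0"
      then have "b x y \<noteq> 0 \<and> (x \<in> S \<or> y \<in> S)" using assms(2) Pair by auto
      then have "x \<in> nbhd S \<and> y \<in> nbhd S"
        using nb_iff nb_sym nbhd_sub by blast
      with that Pair show False by auto
    qed
  qed
  have fin: "finite (nbhd S \<times> nbhd S)" using fin_nbhd[OF assms(1)] by simp
  show "(\<Sum>\<^sub>\<infinity>(x,y). t x y) = (\<Sum>x\<in>nbhd S. \<Sum>y\<in>nbhd S. t x y)"
    using has_sum_fin_zero(1)[OF fin z] by (simp add: sum.cartesian_product)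
  show "(\<lambda>(x,y). t x y) summable_on UNIV"
    using has_sum_fin_zero(2)[OF fin z] by simp
qed

lemma swap_sum: "(\<Sum>x\<in>A. \<Sum>y\<in>A. b x y * g x y) = (\<Sum>x\<in>A. \<Sum>y\<in>A. b x y * g y x)"
  by (subst sum.swap) (simp add: bsym)

lemma lp_sum:
  assumes "finite A" "nb x \<subseteq> A"
  shows "(\<Sum>y\<in>A. b x y * (f x - f y)) = lp f x"
  unfolding lp_def
  by (rule sum.mono_neutral_right) (use assms b_zero in auto)

lemma lap_eq: "lap b f x = lp f x"
  unfolding lap_def lp_def
  by (rule has_sum_fin_zero(1)[OF fin_nb]) (simp add: b_zero)

lemma bil_fin:
  assumes S: "finite S" "\<And>x. \<phi> x \<noteq> 0 \<Longrightarrow> x \<in> S"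
  shows "energy_bil b u \<phi> = 2 * (\<Sum>x\<in>S. \<phi> x * lp u x)"
    and "(\<lambda>(x,y). b x y * (u x - u y) * (\<phi> x - \<phi> y)) summable_on UNIV"
proof -
  let ?A = "nbhd S"
  have nz: "b x y * (u x - u y) * (\<phi> x - \<phi> y) \<noteq> 0 \<Longrightarrow> b x y \<noteq> 0 \<and> (x \<in> S \<or> y \<in> S)" for x y
    using S(2) by (cases "\<phi> x = 0"; cases "\<phi> y = 0") auto
  show "(\<lambda>(x,y). b x y * (u x - u y) * (\<phi> x - \<phi> y)) summable_on UNIV"
    by (rule pair_sum(2)[OF S(1) nz])
  have "energy_bil b u \<phi> = (\<Sum>x\<in>?A. \<Sum>y\<in>?A. b x y * ((u x - u y) * (\<phi> x - \<phi> y)))"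
    unfolding energy_bil_def using pair_sum(1)[OF S(1), where t="\<lambda>x y. b x y * (u x - u y) * (\<phi> x - \<phi> y)", OF nz]
    by (simp add: mult.assoc)
  also have "\<dots> = (\<Sum>x\<in>?A. \<Sum>y\<in>?A. b x y * ((u x - u y) * \<phi> x))
                 + (\<Sum>x\<in>?A. \<Sum>y\<in>?A. b x y * ((u y - u x) * \<phi> y))"
    by (simp add: algebra_simps sum.distrib sum_subtractf)
  also have "(\<Sum>x\<in>?A. \<Sum>y\<in>?A. b x y * ((u y - u x) * \<phi> y))
           = (\<Sum>x\<in>?A. \<Sum>y\<in>?A. b x y * ((u x - u y) * \<phi> x))"
    by (rule swap_sum[symmetric])
  also have "(\<Sum>x\<in>?A. \<Sum>y\<in>?A. b x y * ((u x - u y) * \<phi> x))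
           = (\<Sum>x\<in>?A. \<phi> x * (\<Sum>y\<in>?A. b x y * (u x - u y)))"
    by (simp add: sum_distrib_left algebra_simps)
  also have "\<dots> = (\<Sum>x\<in>S. \<phi> x * (\<Sum>y\<in>?A. b x y * (u x - u y)))"
    by (rule sum.mono_neutral_right) (use S fin_nbhd nbhd_sub in auto)
  also have "\<dots> = (\<Sum>x\<in>S. \<phi> x * lp u x)"
    by (rule sum.cong) (use lp_sum fin_nbhd[OF S(1)] nbhd_sub in auto)
  finally show "energy_bil b u \<phi> = 2 * (\<Sum>x\<in>S. \<phi> x * lp u x)" by simp
qed


definition bp where "bp p = b (fst p) (snd p)"
definition D :: "('a \<Rightarrow> real) \<Rightarrow> 'a \<times> 'a \<Rightarrow> real" where "D u p = u (fst p) - u (snd p)"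

lemma bp_nn: "bp p \<ge> 0" by (simp add: bp_def bnn)

lemma energy_alt: "energy b u = (\<Sum>\<^sub>\<infinity>p. bp p * (D u p)^2)"
  unfolding energy_def bp_def D_def by (simp add: case_prod_unfold)

lemma energy_summable_alt: "energy_summable b u \<longleftrightarrow> (\<lambda>p. bp p * (D u p)^2) summable_on UNIV"
  unfolding energy_summable_def bp_def D_def by (simp add: case_prod_unfold)

lemma bil_alt: "energy_bil b u v = (\<Sum>\<^sub>\<infinity>p. bp p * D u p * D v p)"
  unfolding energy_bil_def bp_def D_def by (simp add: case_prod_unfold)

lemma D_diff: "D (\<lambda>x. u x - v x) p = D u p - D v p"
  unfolding D_def by linarith

lemma lp_alt: "lp f x = dg x * f x - (\<Sum>y\<in>nb x. b x y * f y)"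
  unfolding lp_def dg_def by (simp add: right_diff_distrib sum_subtractf sum_distrib_right)

lemma lp_diff: "lp (\<lambda>x. u x - v x) x = lp u x - lp v x"
  unfolding lp_def sum_subtractf[symmetric] by (rule sum.cong) (auto simp: algebra_simps)

lemma energy_is_bil: "energy b f = energy_bil b f f"
  unfolding energy_def energy_bil_def by (simp add: power2_eq_square mult.assoc)

lemma energy_summable_fin:
  assumes "finite S" "\<And>x. \<phi> x \<noteq> 0 \<Longrightarrow> x \<in> S"
  shows "energy_summable b \<phi>"
  using bil_fin(2)[OF assms, of \<phi>] unfolding energy_summable_def
  by (simp add: power2_eq_square mult.assoc)

lemma infsum_fin1:
  assumes "finite S" "\<And>x. f x \<noteq> 0 \<Longrightarrow> x \<in> S"
  shows "(\<Sum>\<^sub>\<infinity>x. f x) = sum f S" "f summable_on UNIV"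
  using has_sum_fin_zero[OF assms(1)] assms(2) by blast+

end

locale lfo = lfg +
  fixes z0 :: 'a
begin

definition ind where "ind x = (if x = z0 then 1 else (0::real))"
definition T where "T \<alpha> u x = (ind x + (\<Sum>y\<in>nb x. b x y * u y)) / (dg x + \<alpha>)"
definition it where "it \<alpha> k = (T \<alpha> ^^ k) (\<lambda>_. 0)"
definition ua where "ua \<alpha> x = (SUP k. it \<alpha> k x)"

lemma it_0[simp]: "it \<alpha> 0 = (\<lambda>_. 0)" by (simp add: it_def)
lemma it_Suc: "it \<alpha> (Suc k) = T \<alpha> (it \<alpha> k)" by (simp add: it_def)

lemma ind_nn: "ind x \<ge> 0" "ind x \<le> 1" by (auto simp: ind_def)

lemma T_nn: "\<alpha> > 0 \<Longrightarrow> (\<And>y. u y \<ge> 0) \<Longrightarrow> T \<alpha> u x \<ge> 0"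
  unfolding T_def using dg_nn[of x] ind_nn[of x]
  by (intro divide_nonneg_pos add_nonneg_nonneg sum_nonneg mult_nonneg_nonneg bnn) auto

lemma T_mono_gen:
  assumes "0 < \<alpha>" "\<alpha> \<le> \<beta>" "\<And>y. 0 \<le> u y" "\<And>y. u y \<le> v y"
  shows "T \<beta> u x \<le> T \<alpha> v x"
proof -
  have n0: "0 \<le> ind x + (\<Sum>y\<in>nb x. b x y * u y)"
    using ind_nn[of x] assms by (intro add_nonneg_nonneg sum_nonneg mult_nonneg_nonneg bnn) auto
  have "ind x + (\<Sum>y\<in>nb x. b x y * u y) \<le> ind x + (\<Sum>y\<in>nb x. b x y * v y)"
    using assms by (intro add_left_mono sum_mono mult_left_mono bnn) auto
  moreover have "dg x + \<alpha> \<le> dg x + \<beta>" "0 < dg x + \<alpha>" using assms dg_nn[of x] by auto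
  ultimately show ?thesis unfolding T_def
    using n0 by (intro frac_le) (auto intro: order_trans)
qed

lemma T_bound:
  assumes "0 < \<alpha>" "\<And>y. 0 \<le> u y" "\<And>y. u y \<le> 1/\<alpha>"
  shows "T \<alpha> u x \<le> 1/\<alpha>"
proof -
  have "(\<Sum>y\<in>nb x. b x y * u y) \<le> (\<Sum>y\<in>nb x. b x y * (1/\<alpha>))"
    using assms by (intro sum_mono mult_left_mono bnn) auto
  also have "\<dots> = dg x / \<alpha>" by (simp add: dg_def sum_divide_distrib)
  finally have "ind x + (\<Sum>y\<in>nb x. b x y * u y) \<le> (dg x + \<alpha>) / \<alpha>"
    using ind_nn[of x] assms(1) by (simp add: add_divide_distrib)
  then show ?thesis unfolding T_def using dg_nn[of x] assms(1)
    by (simp add: divide_le_eq field_simps)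
qed

lemma it_props:
  assumes "\<alpha> > 0"
  shows "0 \<le> it \<alpha> k x \<and> it \<alpha> k x \<le> it \<alpha> (Suc k) x \<and> it \<alpha> k x \<le> 1/\<alpha>"
proof -
  have "\<forall>x. 0 \<le> it \<alpha> k x \<and> it \<alpha> k x \<le> it \<alpha> (Suc k) x \<and> it \<alpha> k x \<le> 1/\<alpha>"
  proof (induction k)
    case 0
    have "0 \<le> T \<alpha> (\<lambda>_. 0) x" for x by (rule T_nn[OF assms]) simp
    then show ?case using assms by (simp add: it_Suc)
  next
    case (Suc k)
    have a: "0 \<le> it \<alpha> (Suc k) x" for x
      unfolding it_Suc by (rule T_nn[OF assms]) (use Suc in auto)
    have b: "it \<alpha> (Suc k) x \<le> it \<alpha> (Suc (Suc k)) x" for x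
      unfolding it_Suc[of \<alpha> "Suc k"] it_Suc[of \<alpha> k]
      by (rule T_mono_gen[OF assms order_refl]) (use Suc in \<open>auto simp: it_Suc\<close>)
    have c: "it \<alpha> (Suc k) x \<le> 1/\<alpha>" for x
      unfolding it_Suc by (rule T_bound[OF assms]) (use Suc in auto)
    show ?case using a b c by blast
  qed
  then show ?thesis by blast
qed

lemma it_incseq: "\<alpha> > 0 \<Longrightarrow> incseq (\<lambda>k. it \<alpha> k x)"
  using it_props by (intro incseq_SucI) auto

lemma it_lim: "\<alpha> > 0 \<Longrightarrow> (\<lambda>k. it \<alpha> k x) \<longlonglongrightarrow> ua \<alpha> x"
  unfolding ua_def using it_props
  by (intro LIMSEQ_incseq_SUP it_incseq) (auto intro!: bdd_aboveI)

lemma it_le_ua: "\<alpha> > 0 \<Longrightarrow> it \<alpha> k x \<le> ua \<alpha> x"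
  using it_incseq it_lim by (metis incseq_le)

lemma ua_nn: "\<alpha> > 0 \<Longrightarrow> 0 \<le> ua \<alpha> x"
  using it_le_ua it_props by (meson order_trans)

lemma ua_le: "\<alpha> > 0 \<Longrightarrow> ua \<alpha> x \<le> 1/\<alpha>"
  using it_lim it_props by (intro LIMSEQ_le_const2[OF it_lim]) auto

lemma ua_eq:
  assumes "\<alpha> > 0"
  shows "(dg x + \<alpha>) * ua \<alpha> x = ind x + (\<Sum>y\<in>nb x. b x y * ua \<alpha> y)"
proof -
  have pos: "dg x + \<alpha> > 0" using dg_nn[of x] assms by simp
  have "(\<lambda>k. T \<alpha> (it \<alpha> k) x) \<longlonglongrightarrow> (ind x + (\<Sum>y\<in>nb x. b x y * ua \<alpha> y)) / (dg x + \<alpha>)"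
    unfolding T_def by (intro tendsto_intros it_lim assms) (use pos in auto)
  moreover have "(\<lambda>k. T \<alpha> (it \<alpha> k) x) \<longlonglongrightarrow> ua \<alpha> x"
    using LIMSEQ_Suc[OF it_lim[OF assms, of x]] by (simp add: it_Suc)
  ultimately have "ua \<alpha> x = (ind x + (\<Sum>y\<in>nb x. b x y * ua \<alpha> y)) / (dg x + \<alpha>)"
    using LIMSEQ_unique by blast
  then show ?thesis using pos by (simp add: field_simps)
qed

lemma it_anti:
  assumes "0 < \<alpha>" "\<alpha> \<le> \<beta>"
  shows "it \<beta> k x \<le> it \<alpha> k x"
proof -
  have bp: "0 < \<beta>" using assms by simp
  have "\<forall>x. it \<beta> k x \<le> it \<alpha> k x"
  proof (induction k)
    case 0 then show ?case by simp
  next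
    case (Suc k)
    show ?case unfolding it_Suc
      by (intro allI T_mono_gen[OF assms]) (use Suc it_props[OF bp] in auto)
  qed
  then show ?thesis by blast
qed

lemma ua_anti: "0 < \<alpha> \<Longrightarrow> \<alpha> \<le> \<beta> \<Longrightarrow> ua \<beta> x \<le> ua \<alpha> x"
  using it_anti by (intro LIMSEQ_le[OF it_lim it_lim]) auto

lemma it_supp: "\<alpha> > 0 \<Longrightarrow> finite {x. it \<alpha> k x \<noteq> 0}"
proof (induction k)
  case 0 then show ?case by simp
next
  case (Suc k)
  have "{x. it \<alpha> (Suc k) x \<noteq> 0} \<subseteq> insert z0 (nbhd {x. it \<alpha> k x \<noteq> 0})"
  proof
    fix x assume "x \<in> {x. it \<alpha> (Suc k) x \<noteq> 0}"
    then have "ind x + (\<Sum>y\<in>nb x. b x y * it \<alpha> k y) \<noteq> 0" by (auto simp: it_Suc T_def)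
    then have "x = z0 \<or> (\<exists>y\<in>nb x. it \<alpha> k y \<noteq> 0)" by (auto simp: ind_def intro: ccontr)
    then show "x \<in> insert z0 (nbhd {x. it \<alpha> k x \<noteq> 0})"
    proof
      assume "\<exists>y\<in>nb x. it \<alpha> k y \<noteq> 0"
      then obtain y where "y \<in> nb x" "it \<alpha> k y \<noteq> 0" by blast
      then have "x \<in> nb y" "y \<in> {x. it \<alpha> k x \<noteq> 0}" using nb_sym[of y x] by auto
      then show ?thesis using nbhd_sub(2)[of y] by (meson insertI2 subsetD)
    qed simp
  qed
  then show ?case using Suc fin_nbhd by (meson finite_insert finite_subset)
qed

definition qa where "qa \<alpha> f = energy b f / 2 + \<alpha> * l2sq f"
definition qb where "qb \<alpha> u v = energy_bil b u v / 2 + \<alpha> * (\<Sum>\<^sub>\<infinity>y. u y * v y)"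

lemma qb_fin:
  assumes "finite S" "\<And>x. v x \<noteq> 0 \<Longrightarrow> x \<in> S"
  shows "qb \<alpha> u v = (\<Sum>x\<in>S. v x * (lp u x + \<alpha> * u x))"
proof -
  have "(\<Sum>\<^sub>\<infinity>y. u y * v y) = (\<Sum>y\<in>S. u y * v y)"
    by (rule infsum_fin1(1)[OF assms(1)]) (use assms(2) in auto)
  moreover have "energy_bil b u v = 2 * (\<Sum>x\<in>S. v x * lp u x)" by (rule bil_fin(1)[OF assms])
  ultimately show ?thesis unfolding qb_def
    by (simp add: sum_distrib_left algebra_simps sum.distrib sum_distrib_right)
qed

lemma qa_qb: "qa \<alpha> f = qb \<alpha> f f"
  unfolding qa_def qb_def l2sq_def energy_is_bil by (simp add: power2_eq_square)

lemma lp_ua: "\<alpha> > 0 \<Longrightarrow> lp (ua \<alpha>) x + \<alpha> * ua \<alpha> x = ind x"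
  using ua_eq[of \<alpha> x] unfolding lp_alt by (simp add: algebra_simps)

lemma lp_it: "\<alpha> > 0 \<Longrightarrow> lp (it \<alpha> k) x + \<alpha> * it \<alpha> k x \<le> ind x"
proof (cases k)
  case 0 then show ?thesis by (simp add: lp_def ind_def)
next
  case (Suc j)
  assume a: "\<alpha> > 0"
  have pos: "dg x + \<alpha> > 0" using dg_nn[of x] a by simp
  have "(dg x + \<alpha>) * it \<alpha> k x = ind x + (\<Sum>y\<in>nb x. b x y * it \<alpha> j y)"
    using pos by (simp add: Suc it_Suc T_def)
  moreover have "(\<Sum>y\<in>nb x. b x y * it \<alpha> j y) \<le> (\<Sum>y\<in>nb x. b x y * it \<alpha> k y)"
    using it_props[OF a] by (intro sum_mono mult_left_mono bnn) (simp add: Suc)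
  ultimately show ?thesis unfolding lp_alt by (simp add: algebra_simps)
qed

definition Sk where "Sk \<alpha> k = insert z0 {x. it \<alpha> k x \<noteq> 0}"

lemma Sk_fin: "\<alpha> > 0 \<Longrightarrow> finite (Sk \<alpha> k)"
  using it_supp by (auto simp: Sk_def)
lemma Sk_mem: "it \<alpha> k x \<noteq> 0 \<Longrightarrow> x \<in> Sk \<alpha> k" by (auto simp: Sk_def)
lemma Sk_z0: "z0 \<in> Sk \<alpha> k" by (auto simp: Sk_def)

lemma sum_ind: "finite S \<Longrightarrow> z0 \<in> S \<Longrightarrow> (\<Sum>x\<in>S. v x * ind x) = v z0"
  unfolding ind_def by (simp add: if_distrib cong: if_cong)

lemma qa_it: assumes a: "\<alpha> > 0" shows "qa \<alpha> (it \<alpha> k) \<le> it \<alpha> k z0"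
proof -
  have "qa \<alpha> (it \<alpha> k) = (\<Sum>x\<in>Sk \<alpha> k. it \<alpha> k x * (lp (it \<alpha> k) x + \<alpha> * it \<alpha> k x))"
    unfolding qa_qb by (rule qb_fin) (use Sk_fin[OF a] Sk_mem in auto)
  also have "\<dots> \<le> (\<Sum>x\<in>Sk \<alpha> k. it \<alpha> k x * ind x)"
    using it_props[OF a] lp_it[OF a] by (intro sum_mono mult_left_mono) auto
  also have "\<dots> = it \<alpha> k z0" using Sk_fin[OF a] Sk_z0 by (simp add: sum_ind)
  finally show ?thesis .
qed

lemma it_esum: "\<alpha> > 0 \<Longrightarrow> energy_summable b (it \<alpha> k)"
  by (rule energy_summable_fin[OF Sk_fin]) (use Sk_mem in auto)

lemma it_l2: "\<alpha> > 0 \<Longrightarrow> in_l2 (it \<alpha> k)"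
  unfolding in_l2_def by (rule infsum_fin1(2)[OF Sk_fin]) (use Sk_mem in auto)

lemma ua_space:
  assumes a: "\<alpha> > 0"
  shows "energy_summable b (ua \<alpha>)" "in_l2 (ua \<alpha>)" "qa \<alpha> (ua \<alpha>) \<le> ua \<alpha> z0"
proof -
  let ?f = "\<lambda>p. bp p * (D (ua \<alpha>) p)^2" and ?g = "\<lambda>x. (ua \<alpha> x)^2"
  have B: "1/2 * sum ?f F + \<alpha> * sum ?g H \<le> ua \<alpha> z0" if "finite F" "finite H" for F H
  proof -
    let ?fk = "\<lambda>k p. bp p * (D (it \<alpha> k) p)^2" and ?gk = "\<lambda>k x. (it \<alpha> k x)^2"
    have lim: "(\<lambda>k. 1/2 * sum (?fk k) F + \<alpha> * sum (?gk k) H) \<longlonglongrightarrow> 1/2 * sum ?f F + \<alpha> * sum ?g H"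
      unfolding D_def by (intro tendsto_intros it_lim a)
    have "1/2 * sum (?fk k) F + \<alpha> * sum (?gk k) H \<le> ua \<alpha> z0" for k
    proof -
      have "sum (?fk k) F \<le> energy b (it \<alpha> k)"
        unfolding energy_alt
        by (rule finite_sum_le_infsum) (use it_esum[OF a] that bp_nn in \<open>auto simp: energy_summable_alt\<close>)
      moreover have "sum (?gk k) H \<le> l2sq (it \<alpha> k)"
        unfolding l2sq_def
        by (rule finite_sum_le_infsum) (use it_l2[OF a] that in \<open>auto simp: in_l2_def\<close>)
      ultimately have "1/2 * sum (?fk k) F + \<alpha> * sum (?gk k) H \<le> qa \<alpha> (it \<alpha> k)"
        unfolding qa_def using a mult_left_mono[of "sum (?gk k) H" "l2sq (it \<alpha> k)" \<alpha>] by linarith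
      also have "\<dots> \<le> ua \<alpha> z0" using qa_it[OF a] it_le_ua[OF a] by (meson order_trans)
      finally show ?thesis .
    qed
    then show ?thesis by (intro LIMSEQ_le_const2[OF lim]) auto
  qed
  have r: "?f summable_on UNIV" "?g summable_on UNIV" "1/2 * infsum ?f UNIV + \<alpha> * infsum ?g UNIV \<le> ua \<alpha> z0"
    by (rule two_sums_bound[OF _ _ _ a B]; (simp add: bp_nn)?)+
  show "energy_summable b (ua \<alpha>)" using r(1) by (simp add: energy_summable_alt)
  show "in_l2 (ua \<alpha>)" using r(2) by (simp add: in_l2_def)
  show "qa \<alpha> (ua \<alpha>) \<le> ua \<alpha> z0" using r(3) by (simp add: qa_def energy_alt l2sq_def)
qed

lemma qa_expand:
  assumes u: "energy_summable b u" "in_l2 u" and v: "energy_summable b v" "in_l2 v" and a: "\<alpha> \<ge> 0"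
  shows "energy_summable b (\<lambda>x. u x - v x)" "in_l2 (\<lambda>x. u x - v x)"
    "qa \<alpha> (\<lambda>x. u x - v x) = qa \<alpha> u - 2 * qb \<alpha> u v + qa \<alpha> v"
    "qa \<alpha> (\<lambda>x. u x - v x) \<le> 2 * qa \<alpha> u + 2 * qa \<alpha> v"
proof -
  note E = sq_generic[of bp "D u" "D v", OF u(1)[unfolded energy_summable_alt] v(1)[unfolded energy_summable_alt] bp_nn]
  have ul: "(\<lambda>i. 1 * (u i)^2) summable_on UNIV" and vl: "(\<lambda>i. 1 * (v i)^2) summable_on UNIV"
    using u(2) v(2) by (auto simp: in_l2_def)
  note L = sq_generic[of "\<lambda>_. 1" u v, OF ul vl, simplified]
  show "energy_summable b (\<lambda>x. u x - v x)" using E(2) by (simp add: energy_summable_alt D_diff)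
  show "in_l2 (\<lambda>x. u x - v x)" using L(2) by (simp add: in_l2_def)
  have e1: "energy b (\<lambda>x. u x - v x) = energy b u - 2 * energy_bil b u v + energy b v"
    using E(3) by (simp add: energy_alt bil_alt D_diff)
  have e2: "l2sq (\<lambda>x. u x - v x) = l2sq u - 2 * (\<Sum>\<^sub>\<infinity>y. u y * v y) + l2sq v"
    using L(3) by (simp add: l2sq_def)
  show "qa \<alpha> (\<lambda>x. u x - v x) = qa \<alpha> u - 2 * qb \<alpha> u v + qa \<alpha> v"
    unfolding qa_def qb_def e1 e2 by (simp add: field_simps)
  have e3: "energy b (\<lambda>x. u x - v x) \<le> 2 * energy b u + 2 * energy b v"
    using E(5) by (simp add: energy_alt D_diff)
  have e4: "l2sq (\<lambda>x. u x - v x) \<le> 2 * l2sq u + 2 * l2sq v"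
    using L(5) by (simp add: l2sq_def)
  show "qa \<alpha> (\<lambda>x. u x - v x) \<le> 2 * qa \<alpha> u + 2 * qa \<alpha> v"
    unfolding qa_def using e3 mult_left_mono[OF e4 a] by (simp add: algebra_simps)
qed

lemma energy_nn: "energy b f \<ge> 0"
  unfolding energy_alt by (intro infsum_nonneg) (simp add: bp_nn)

lemma l2sq_nn: "l2sq f \<ge> 0"
  unfolding l2sq_def by (intro infsum_nonneg) simp

lemma qa_nn: "\<alpha> \<ge> 0 \<Longrightarrow> qa \<alpha> f \<ge> 0"
  unfolding qa_def using energy_nn[of f] l2sq_nn[of f] by simp

lemma qa_lower: "\<alpha> > 0 \<Longrightarrow> min 1 \<alpha> * (energy b f / 2 + l2sq f) \<le> qa \<alpha> f"
proof -
  assume a: "\<alpha> > 0"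
  have "min 1 \<alpha> * (energy b f / 2) \<le> energy b f / 2"
    using energy_nn[of f] a by (intro mult_left_le_one_le) auto
  moreover have "min 1 \<alpha> * l2sq f \<le> \<alpha> * l2sq f"
    using l2sq_nn[of f] by (intro mult_right_mono) auto
  ultimately show ?thesis unfolding qa_def by (simp add: distrib_left)
qed

lemma qa_upper: "\<alpha> > 0 \<Longrightarrow> qa \<alpha> f \<le> max 1 \<alpha> * (energy b f / 2 + l2sq f)"
proof -
  assume a: "\<alpha> > 0"
  have "energy b f / 2 \<le> max 1 \<alpha> * (energy b f / 2)"
    using energy_nn[of f] a by (intro mult_le_cancel_right1[THEN iffD2] order_trans[OF _ max.cobounded1]) auto
  moreover have "\<alpha> * l2sq f \<le> max 1 \<alpha> * l2sq f"
    using l2sq_nn[of f] by (intro mult_right_mono) auto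
  ultimately show ?thesis unfolding qa_def by (simp add: distrib_left)
qed

lemma ua_qb_it: "\<alpha> > 0 \<Longrightarrow> qb \<alpha> (ua \<alpha>) (it \<alpha> k) = it \<alpha> k z0"
proof -
  assume a: "\<alpha> > 0"
  have "qb \<alpha> (ua \<alpha>) (it \<alpha> k) = (\<Sum>x\<in>Sk \<alpha> k. it \<alpha> k x * (lp (ua \<alpha>) x + \<alpha> * ua \<alpha> x))"
    by (rule qb_fin) (use Sk_fin[OF a] Sk_mem in auto)
  also have "\<dots> = (\<Sum>x\<in>Sk \<alpha> k. it \<alpha> k x * ind x)" using lp_ua[OF a] by simp
  also have "\<dots> = it \<alpha> k z0" using Sk_fin[OF a] Sk_z0 by (simp add: sum_ind)
  finally show ?thesis .
qed

lemma ua_approx: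
  assumes a: "\<alpha> > 0"
  shows "qa \<alpha> (\<lambda>x. ua \<alpha> x - it \<alpha> k x) \<le> ua \<alpha> z0 - it \<alpha> k z0"
    "energy_summable b (\<lambda>x. ua \<alpha> x - it \<alpha> k x)" "in_l2 (\<lambda>x. ua \<alpha> x - it \<alpha> k x)"
proof -
  note X = qa_expand[OF ua_space(1,2)[OF a] it_esum[OF a] it_l2[OF a], of \<alpha> k]
  show "qa \<alpha> (\<lambda>x. ua \<alpha> x - it \<alpha> k x) \<le> ua \<alpha> z0 - it \<alpha> k z0"
    using X(3) a ua_qb_it[OF a, of k] qa_it[OF a, of k] ua_space(3)[OF a] by simp
  show "energy_summable b (\<lambda>x. ua \<alpha> x - it \<alpha> k x)" "in_l2 (\<lambda>x. ua \<alpha> x - it \<alpha> k x)"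
    using X a by auto
qed

lemma it_fin_supp: "\<alpha> > 0 \<Longrightarrow> fin_supp (it \<alpha> k)"
  unfolding fin_supp_def using it_supp by blast

lemma ua_form: assumes a: "\<alpha> > 0" shows "ua \<alpha> \<in> form_domain b"
proof -
  have "\<exists>\<phi>. fin_supp \<phi> \<and> energy_summable b (\<lambda>x. ua \<alpha> x - \<phi> x) \<and>
        energy b (\<lambda>x. ua \<alpha> x - \<phi> x) / 2 + l2sq (\<lambda>x. ua \<alpha> x - \<phi> x) < \<epsilon>" if e: "\<epsilon> > 0" for \<epsilon>
  proof -
    have m: "min 1 \<alpha> > 0" using a by simp
    have "(\<lambda>k. it \<alpha> k z0) \<longlonglongrightarrow> ua \<alpha> z0" by (rule it_lim[OF a])
    then obtain k where k: "\<bar>it \<alpha> k z0 - ua \<alpha> z0\<bar> < \<epsilon> * min 1 \<alpha>"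
      using m e by (metis LIMSEQ_iff mult_pos_pos real_norm_def order_refl)
    have "min 1 \<alpha> * (energy b (\<lambda>x. ua \<alpha> x - it \<alpha> k x) / 2 + l2sq (\<lambda>x. ua \<alpha> x - it \<alpha> k x))
          \<le> ua \<alpha> z0 - it \<alpha> k z0"
      using qa_lower[OF a] ua_approx(1)[OF a] order_trans by blast
    also have "\<dots> < \<epsilon> * min 1 \<alpha>" using k by simp
    finally have "energy b (\<lambda>x. ua \<alpha> x - it \<alpha> k x) / 2 + l2sq (\<lambda>x. ua \<alpha> x - it \<alpha> k x) < \<epsilon>"
      using m by (simp add: mult.commute)
    then show ?thesis using it_fin_supp[OF a] ua_approx(2)[OF a] by blast
  qed
  then show ?thesis unfolding form_domain_def using ua_space[OF a] by blast
qed

lemma fin_supp_S: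
  assumes "fin_supp \<phi>"
  shows "finite (insert z0 {x. \<phi> x \<noteq> 0})" "\<And>x. \<phi> x \<noteq> 0 \<Longrightarrow> x \<in> insert z0 {x. \<phi> x \<noteq> 0}"
    "z0 \<in> insert z0 {x. \<phi> x \<noteq> 0}"
  using assms by (auto simp: fin_supp_def)

lemma ua_weak:
  assumes a: "\<alpha> > 0" and f: "fin_supp \<phi>"
  shows "energy_bil b (ua \<alpha>) \<phi> / 2 + \<alpha> * (\<Sum>\<^sub>\<infinity>y. ua \<alpha> y * \<phi> y) = \<phi> z0"
proof -
  have "qb \<alpha> (ua \<alpha>) \<phi> = (\<Sum>x\<in>insert z0 {x. \<phi> x \<noteq> 0}. \<phi> x * (lp (ua \<alpha>) x + \<alpha> * ua \<alpha> x))"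
    by (rule qb_fin[OF fin_supp_S(1,2)[OF f]])
  also have "\<dots> = \<phi> z0" using lp_ua[OF a] fin_supp_S[OF f] by (simp add: sum_ind)
  finally show ?thesis by (simp add: qb_def)
qed

lemma fin_esum_l2:
  assumes "fin_supp \<phi>"
  shows "energy_summable b \<phi>" "in_l2 \<phi>"
proof -
  have f: "finite {x. \<phi> x \<noteq> 0}" using assms by (simp add: fin_supp_def)
  show "energy_summable b \<phi>" by (rule energy_summable_fin[OF f]) auto
  show "in_l2 \<phi>" unfolding in_l2_def by (rule infsum_fin1(2)[OF f]) auto
qed

lemma fin_supp_diff: "fin_supp \<phi> \<Longrightarrow> fin_supp \<psi> \<Longrightarrow> fin_supp (\<lambda>x. \<phi> x - \<psi> x)"
  unfolding fin_supp_def by (rule finite_subset[of _ "{x. \<phi> x \<noteq> 0} \<union> {x. \<psi> x \<noteq> 0}"]) auto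

lemma uniq:
  assumes a: "\<alpha> > 0" and uf: "u \<in> form_domain b"
    and w: "\<forall>\<phi>. fin_supp \<phi> \<longrightarrow> energy_bil b u \<phi> / 2 + \<alpha> * (\<Sum>\<^sub>\<infinity>y. u y * \<phi> y) = \<phi> z0"
  shows "u = ua \<alpha>"
proof -
  define d where "d = (\<lambda>x. u x - ua \<alpha> x)"
  have ue: "energy_summable b u" "in_l2 u" using uf by (auto simp: form_domain_def)
  note dX = qa_expand[OF ue ua_space(1,2)[OF a] less_imp_le[OF a], folded d_def]
  have qbd: "qb \<alpha> d \<psi> = 0" if "fin_supp \<psi>" for \<psi>
  proof -
    note S = fin_supp_S[OF that]
    have "qb \<alpha> d \<psi> = (\<Sum>x\<in>insert z0 {x. \<psi> x \<noteq> 0}. \<psi> x * (lp d x + \<alpha> * d x))"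
      by (rule qb_fin[OF S(1,2)])
    also have "\<dots> = (\<Sum>x\<in>insert z0 {x. \<psi> x \<noteq> 0}. \<psi> x * (lp u x + \<alpha> * u x))
       - (\<Sum>x\<in>insert z0 {x. \<psi> x \<noteq> 0}. \<psi> x * (lp (ua \<alpha>) x + \<alpha> * ua \<alpha> x))"
      unfolding d_def lp_diff sum_subtractf[symmetric] by (rule sum.cong) (auto simp: algebra_simps)
    also have "\<dots> = qb \<alpha> u \<psi> - qb \<alpha> (ua \<alpha>) \<psi>"
      using qb_fin[OF S(1,2)] by simp
    also have "\<dots> = 0" using w that ua_weak[OF a that] by (simp add: qb_def)
    finally show ?thesis .
  qed
  have key: "qa \<alpha> d \<le> qa \<alpha> (\<lambda>x. d x - \<psi> x)" if "fin_supp \<psi>" for \<psi>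
  proof -
    note pX = fin_esum_l2[OF that]
    have "qa \<alpha> (\<lambda>x. d x - \<psi> x) = qa \<alpha> d - 2 * qb \<alpha> d \<psi> + qa \<alpha> \<psi>"
      by (rule qa_expand(3)[OF dX(1,2) pX less_imp_le[OF a]])
    then show ?thesis using qbd[OF that] qa_nn[of \<alpha> \<psi>] a by simp
  qed
  have small: "qa \<alpha> d \<le> 2 * (max 1 \<alpha> * \<epsilon>) + 2 * (ua \<alpha> z0 - it \<alpha> k z0)" if e: "\<epsilon> > 0" for \<epsilon> k
  proof -
    obtain \<phi> where \<phi>: "fin_supp \<phi>" "energy_summable b (\<lambda>x. u x - \<phi> x)"
      "energy b (\<lambda>x. u x - \<phi> x) / 2 + l2sq (\<lambda>x. u x - \<phi> x) < \<epsilon>"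
      using uf e unfolding form_domain_def by blast
    define \<psi> where "\<psi> = (\<lambda>x. \<phi> x - it \<alpha> k x)"
    have fp: "fin_supp \<psi>" unfolding \<psi>_def by (rule fin_supp_diff[OF \<phi>(1) it_fin_supp[OF a]])
    have dp: "(\<lambda>x. d x - \<psi> x) = (\<lambda>x. (u x - \<phi> x) - (ua \<alpha> x - it \<alpha> k x))"
      unfolding d_def \<psi>_def by (auto simp: algebra_simps)
    have l2p: "in_l2 (\<lambda>x. u x - \<phi> x)"
      using qa_expand(2)[OF ue fin_esum_l2[OF \<phi>(1)], of 1] by simp
    have h0: "qa \<alpha> d \<le> qa \<alpha> (\<lambda>x. d x - \<psi> x)" by (rule key[OF fp])
    have h1: "qa \<alpha> (\<lambda>x. d x - \<psi> x) \<le> 2 * qa \<alpha> (\<lambda>x. u x - \<phi> x) + 2 * qa \<alpha> (\<lambda>x. ua \<alpha> x - it \<alpha> k x)"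
      unfolding dp by (rule qa_expand(4)[OF \<phi>(2) l2p ua_approx(2,3)[OF a]]) (use a in simp)
    have "max 1 \<alpha> * (energy b (\<lambda>x. u x - \<phi> x) / 2 + l2sq (\<lambda>x. u x - \<phi> x)) \<le> max 1 \<alpha> * \<epsilon>"
      using \<phi>(3) by (intro mult_left_mono) auto
    then have h2: "qa \<alpha> (\<lambda>x. u x - \<phi> x) \<le> max 1 \<alpha> * \<epsilon>"
      using qa_upper[OF a, of "\<lambda>x. u x - \<phi> x"] by linarith
    show ?thesis using h0 h1 h2 ua_approx(1)[OF a, of k] by (smt (verit))
  qed
  have "qa \<alpha> d \<le> 0"
  proof (rule ccontr)
    assume "\<not> qa \<alpha> d \<le> 0"
    then have pos: "qa \<alpha> d > 0" by simp
    define \<epsilon> where "\<epsilon> = qa \<alpha> d / (8 * max 1 \<alpha>)"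
    have mp: "max 1 \<alpha> > 0" by simp
    have ep: "\<epsilon> > 0" unfolding \<epsilon>_def using pos mp by simp
    have "(\<lambda>k. it \<alpha> k z0) \<longlonglongrightarrow> ua \<alpha> z0" by (rule it_lim[OF a])
    then obtain k where k: "\<bar>it \<alpha> k z0 - ua \<alpha> z0\<bar> < qa \<alpha> d / 8"
      using pos by (metis LIMSEQ_iff real_norm_def order_refl zero_less_divide_iff zero_less_numeral)
    have "2 * (max 1 \<alpha> * \<epsilon>) = qa \<alpha> d / 4" unfolding \<epsilon>_def using mp by simp
    then show False using small[OF ep, of k] k pos by (simp add: abs_less_iff)
  qed
  moreover have "\<alpha> * l2sq d \<le> qa \<alpha> d" unfolding qa_def using energy_nn[of d] by simp
  ultimately have "\<alpha> * l2sq d \<le> 0" by linarith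
  then have "l2sq d \<le> 0" using a by (simp add: mult_le_0_iff)
  have "d x = 0" for x
  proof -
    have "(\<Sum>y\<in>{x}. (d y)^2) \<le> l2sq d" unfolding l2sq_def
      by (rule finite_sum_le_infsum) (use dX(2) in \<open>auto simp: in_l2_def\<close>)
    then have "(d x)^2 \<le> 0" using \<open>l2sq d \<le> 0\<close> by (simp only: sum.insert finite.emptyI empty_iff sum.empty add_0_right not_False_eq_True)
    then show ?thesis by simp
  qed
  then show ?thesis unfolding d_def by auto
qed

lemma resolvent_ua: "\<alpha> > 0 \<Longrightarrow> resolvent b \<alpha> z0 = ua \<alpha>"
  unfolding resolvent_def
  by (rule the_equality) (use ua_form ua_weak uniq in auto)

lemma ua_pos: "\<alpha> > 0 \<Longrightarrow> ua \<alpha> z0 > 0"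
proof -
  assume a: "\<alpha> > 0"
  have "it \<alpha> 1 z0 = 1 / (dg z0 + \<alpha>)" by (simp add: it_def T_def ind_def)
  moreover have "dg z0 + \<alpha> > 0" using dg_nn[of z0] a by simp
  ultimately have "it \<alpha> 1 z0 > 0" by simp
  then show ?thesis using it_le_ua[OF a, of 1 z0] by simp
qed

definition sq where "sq (n::nat) = 1 / real (Suc n)"
lemma sq_pos: "sq n > 0" by (simp add: sq_def)

lemma ua_SUP_lims:
  fixes x
  defines "s \<equiv> (SUP \<alpha>\<in>{0<..}. ereal (ua \<alpha> x))"
  shows "((\<lambda>\<alpha>. ereal (resolvent b \<alpha> z0 x)) \<longlongrightarrow> s) (at_right 0)"
    "(\<lambda>n. ereal (ua (sq n) x)) \<longlonglongrightarrow> s"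
proof -
  have up: "ereal (ua \<alpha> x) \<le> s" if "\<alpha> > 0" for \<alpha> unfolding s_def using that by (intro SUP_upper) auto
  have low: "\<exists>\<alpha>0>0. a < ereal (ua \<alpha>0 x)" if "a < s" for a
    using that unfolding s_def by (auto simp: less_SUP_iff)
  show "((\<lambda>\<alpha>. ereal (resolvent b \<alpha> z0 x)) \<longlongrightarrow> s) (at_right 0)"
  proof (rule order_tendstoI)
    fix a assume "a < s"
    then obtain \<alpha>0 where a0: "\<alpha>0 > 0" "a < ereal (ua \<alpha>0 x)" using low by blast
    have "\<forall>\<alpha>>0. \<alpha> < \<alpha>0 \<longrightarrow> a < ereal (resolvent b \<alpha> z0 x)"
    proof (intro allI impI)
      fix \<alpha> :: real assume "\<alpha> > 0" "\<alpha> < \<alpha>0"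
      then have "ua \<alpha>0 x \<le> ua \<alpha> x" by (intro ua_anti) auto
      then show "a < ereal (resolvent b \<alpha> z0 x)" using a0 resolvent_ua[OF \<open>\<alpha> > 0\<close>]
        by (metis ereal_less_eq(3) order_less_le_trans)
    qed
    then show "\<forall>\<^sub>F \<alpha> in at_right 0. a < ereal (resolvent b \<alpha> z0 x)"
      using a0(1) by (subst eventually_at_right[OF a0(1)]) blast
  next
    fix a assume "s < a"
    have "\<forall>\<^sub>F \<alpha> in at_right (0::real). 0 < \<alpha>" by (rule eventually_at_right_less)
    then show "\<forall>\<^sub>F \<alpha> in at_right 0. ereal (resolvent b \<alpha> z0 x) < a"
      by (rule eventually_mono) (use up \<open>s < a\<close> resolvent_ua in \<open>auto intro: order_le_less_trans\<close>)
  qed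
  show "(\<lambda>n. ereal (ua (sq n) x)) \<longlonglongrightarrow> s"
  proof (rule order_tendstoI)
    fix a assume "a < s"
    then obtain \<alpha>0 where a0: "\<alpha>0 > 0" "a < ereal (ua \<alpha>0 x)" using low by blast
    obtain N where N: "1 / real (Suc N) < \<alpha>0" using a0(1)
      by (metis nat_approx_posE)
    have "a < ereal (ua (sq n) x)" if "n \<ge> N" for n
    proof -
      have "sq n \<le> 1 / real (Suc N)" unfolding sq_def using that
        by (intro divide_left_mono) auto
      then have "ua \<alpha>0 x \<le> ua (sq n) x" using N by (intro ua_anti sq_pos) auto
      then show ?thesis using a0 by (metis ereal_less_eq(3) order_less_le_trans)
    qed
    then show "\<forall>\<^sub>F n in sequentially. a < ereal (ua (sq n) x)"
      unfolding eventually_sequentially by blast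
  next
    fix a assume "s < a"
    then have "ereal (ua (sq n) x) < a" for n using up[OF sq_pos[of n]] by (auto intro: order_le_less_trans)
    then show "\<forall>\<^sub>F n in sequentially. ereal (ua (sq n) x) < a" by simp
  qed
qed

lemma green_SUP: "green b z0 x = (SUP \<alpha>\<in>{0<..}. ereal (ua \<alpha> x))"
  unfolding green_def by (rule tendsto_Lim[OF trivial_limit_at_right_real ua_SUP_lims(1)])

end

locale lfot = lfo +
  assumes tr: "\<And>x. green b z0 x < \<infinity>" and conn: "connected_graph b"
begin

definition G where "G x = real_of_ereal (green b z0 x)"

lemma green_G: "green b z0 x = ereal (G x)"
proof -
  have "ereal (ua 1 x) \<le> green b z0 x" unfolding green_SUP by (intro SUP_upper) auto
  moreover have "0 \<le> ua 1 x" by (rule ua_nn) simp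
  ultimately have "green b z0 x \<noteq> - \<infinity>" by auto
  then show ?thesis using tr[of x] unfolding G_def by (cases "green b z0 x") auto
qed

lemma ua_le_G: "\<alpha> > 0 \<Longrightarrow> ua \<alpha> x \<le> G x"
proof -
  assume "\<alpha> > 0"
  then have "ereal (ua \<alpha> x) \<le> green b z0 x" unfolding green_SUP by (intro SUP_upper) auto
  then show ?thesis by (simp add: green_G)
qed

lemma ua_sq_lim: "(\<lambda>n. ua (sq n) x) \<longlonglongrightarrow> G x"
  using ua_SUP_lims(2)[of x] unfolding green_SUP[symmetric] green_G lim_ereal .

lemma sq_lim: "sq \<longlonglongrightarrow> 0"
  unfolding sq_def using LIMSEQ_inverse_real_of_nat by (simp add: inverse_eq_divide)

lemma G_eq: "dg x * G x = ind x + (\<Sum>y\<in>nb x. b x y * G y)"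
proof -
  have l1: "(\<lambda>n. (dg x + sq n) * ua (sq n) x) \<longlonglongrightarrow> (dg x + 0) * G x"
    by (intro tendsto_intros sq_lim ua_sq_lim)
  have l2: "(\<lambda>n. ind x + (\<Sum>y\<in>nb x. b x y * ua (sq n) y)) \<longlonglongrightarrow> ind x + (\<Sum>y\<in>nb x. b x y * G y)"
    by (intro tendsto_intros ua_sq_lim)
  have "(\<lambda>n. (dg x + sq n) * ua (sq n) x) = (\<lambda>n. ind x + (\<Sum>y\<in>nb x. b x y * ua (sq n) y))"
    using ua_eq sq_pos by auto
  with l1 l2 show ?thesis using LIMSEQ_unique by fastforce
qed

lemma lpG: "lp G x = ind x"
  using G_eq[of x] unfolding lp_alt by simp

lemma G_nn: "G x \<ge> 0" using ua_le_G[of 1 x] ua_nn[of 1 x] by simp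

lemma G_prop:
  assumes "G y > 0" "b x y > 0" shows "G x > 0"
proof -
  have "b x y * G y \<le> (\<Sum>z\<in>nb x. b x z * G z)"
    by (rule member_le_sum) (use assms G_nn bnn fin_nb in \<open>auto simp: nb_def\<close>)
  moreover have "b x y * G y > 0" using assms by simp
  ultimately have "dg x * G x > 0" using G_eq[of x] ind_nn[of x] by linarith
  then show ?thesis using dg_nn[of x] G_nn[of x] by (simp add: zero_less_mult_iff)
qed

lemma G_pos: "G x > 0"
proof -
  have "(\<lambda>u v. b u v > 0)\<^sup>*\<^sup>* z0 x" using conn by (simp add: connected_graph_def)
  then show ?thesis
  proof (induction rule: rtranclp_induct)
    case base then show ?case using ua_le_G[of 1 z0] ua_pos[of 1] by simp
  next
    case (step y z) then show ?case using G_prop[of y z] bsym[of y z] by simp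
  qed
qed

lemma harnack: "b x y > 0 \<Longrightarrow> E * G y \<le> G x"
proof -
  assume bxy: "b x y > 0"
  have "b x y * G y \<le> (\<Sum>z\<in>nb x. b x z * G z)"
    by (rule member_le_sum) (use bxy G_nn bnn fin_nb in \<open>auto simp: nb_def\<close>)
  then have "b x y * G y \<le> dg x * G x" using G_eq[of x] ind_nn[of x] by linarith
  moreover have "E * dg x * G y \<le> b x y * G y" using ellE[OF bxy] G_nn[of y] by (intro mult_right_mono) auto
  ultimately have "dg x * (E * G y) \<le> dg x * G x" by (simp add: algebra_simps)
  moreover have "b x y \<le> dg x" unfolding dg_def
    by (rule member_le_sum) (use bxy bnn fin_nb in \<open>auto simp: nb_def\<close>)
  then have "dg x > 0" using bxy by linarith
  ultimately show ?thesis by simp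
qed

definition Lv where "Lv t = {x. t \<le> G x}"
definition SS where "SS A = (\<Sum>x\<in>A. \<Sum>y\<in>A. b x y * (G x - G y) * (ln (G x) - ln (G y)))"

lemma sym_split:
  "(\<Sum>x\<in>A. \<Sum>y\<in>A. b x y * (g x - g y) * (h x - h y)) = 2 * (\<Sum>x\<in>A. h x * (\<Sum>y\<in>A. b x y * (g x - g y)))"
proof -
  have "(\<Sum>x\<in>A. \<Sum>y\<in>A. b x y * (g x - g y) * (h x - h y))
      = (\<Sum>x\<in>A. \<Sum>y\<in>A. b x y * ((g x - g y) * h x)) + (\<Sum>x\<in>A. \<Sum>y\<in>A. b x y * ((g y - g x) * h y))"
    by (simp add: algebra_simps sum.distrib sum_subtractf)
  also have "(\<Sum>x\<in>A. \<Sum>y\<in>A. b x y * ((g y - g x) * h y)) = (\<Sum>x\<in>A. \<Sum>y\<in>A. b x y * ((g x - g y) * h x))"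
    by (rule swap_sum[symmetric])
  finally show ?thesis by (simp add: sum_distrib_left algebra_simps)
qed

lemma antisym0: "(\<Sum>x\<in>A. \<Sum>y\<in>A. b x y * (g x - g y)) = 0"
proof -
  have "(\<Sum>x\<in>A. \<Sum>y\<in>A. b x y * (g x - g y)) = (\<Sum>x\<in>A. \<Sum>y\<in>A. b x y * (g y - g x))"
    by (rule swap_sum)
  also have "\<dots> = - (\<Sum>x\<in>A. \<Sum>y\<in>A. b x y * (g x - g y))"
    by (simp add: algebra_simps sum_negf[symmetric])
  finally show ?thesis by simp
qed

lemma in_sum_split:
  assumes "finite A"
  shows "(\<Sum>y\<in>A. b x y * (g x - g y)) = lp g x - (\<Sum>y\<in>nb x - A. b x y * (g x - g y))"
proof -
  have "(\<Sum>y\<in>A. b x y * (g x - g y)) = (\<Sum>y\<in>A \<inter> nb x. b x y * (g x - g y))"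
    by (rule sum.mono_neutral_right) (use assms b_zero in auto)
  moreover have "lp g x = (\<Sum>y\<in>nb x \<inter> A. b x y * (g x - g y)) + (\<Sum>y\<in>nb x - A. b x y * (g x - g y))"
    unfolding lp_def using fin_nb by (simp add: sum.Int_Diff)
  ultimately show ?thesis by (simp add: Int_commute)
qed

lemma Epos': "E > 0" by (rule Epos)

lemma level_SS:
  assumes t: "t > 0" "t \<le> G z0" and fin: "finite (Lv t)"
  shows "2 * (ln (G z0) - ln (t / E)) \<le> SS (Lv t)" "SS (Lv t) \<le> 2 * (ln (G z0) - ln t)"
proof -
  let ?A = "Lv t"
  define out where "out x = (\<Sum>y\<in>nb x - ?A. b x y * (G x - G y))" for x
  have z0A: "z0 \<in> ?A" using t by (simp add: Lv_def)
  have inn: "(\<Sum>y\<in>?A. b x y * (G x - G y)) = ind x - out x" for x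
    unfolding out_def in_sum_split[OF fin] lpG ..
  have SSe: "SS ?A = 2 * (ln (G z0) - (\<Sum>x\<in>?A. ln (G x) * out x))"
  proof -
    have "SS ?A = 2 * (\<Sum>x\<in>?A. ln (G x) * (ind x - out x))"
      unfolding SS_def sym_split inn ..
    also have "\<dots> = 2 * ((\<Sum>x\<in>?A. ln (G x) * ind x) - (\<Sum>x\<in>?A. ln (G x) * out x))"
      by (simp add: algebra_simps sum_subtractf)
    also have "(\<Sum>x\<in>?A. ln (G x) * ind x) = ln (G z0)" using sum_ind[OF fin z0A] .
    finally show ?thesis .
  qed
  have flux: "(\<Sum>x\<in>?A. out x) = 1"
  proof -
    have "0 = (\<Sum>x\<in>?A. \<Sum>y\<in>?A. b x y * (G x - G y))" using antisym0 by simp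
    also have "\<dots> = (\<Sum>x\<in>?A. ind x) - (\<Sum>x\<in>?A. out x)" unfolding inn by (simp add: sum_subtractf)
    also have "(\<Sum>x\<in>?A. ind x) = 1" using sum_ind[OF fin z0A, of "\<lambda>_. 1"] by simp
    finally show ?thesis by simp
  qed
  have out_nn: "out x \<ge> 0" if "x \<in> ?A" for x
    unfolding out_def using that by (intro sum_nonneg mult_nonneg_nonneg bnn) (auto simp: Lv_def)
  have lo: "ln t * out x \<le> ln (G x) * out x" if "x \<in> ?A" for x
    using that out_nn[OF that] t by (intro mult_right_mono) (auto simp: Lv_def)
  have hi: "ln (G x) * out x \<le> ln (t / E) * out x" if "x \<in> ?A" for x
  proof (cases "out x = 0")
    case True then show ?thesis by simp
  next
    case False
    have "\<exists>y\<in>nb x - ?A. b x y * (G x - G y) \<noteq> 0"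
      using False unfolding out_def by (rule contrapos_np) (simp add: sum.neutral)
    then obtain y where y: "y \<in> nb x" "y \<notin> ?A" by blast
    have "E * G x \<le> G y" using harnack[of y x] y bsym[of x y] by (simp add: nb_def)
    then have "E * G x < t" using y by (simp add: Lv_def)
    then have "G x < t / E" using Epos by (simp add: field_simps)
    then have "ln (G x) \<le> ln (t / E)" using G_pos[of x] by simp
    then show ?thesis using out_nn[OF that] by (intro mult_right_mono)
  qed
  have "(\<Sum>x\<in>?A. ln t * out x) \<le> (\<Sum>x\<in>?A. ln (G x) * out x)"
    by (rule sum_mono) (rule lo)
  then have "ln t \<le> (\<Sum>x\<in>?A. ln (G x) * out x)"
    using flux by (simp add: sum_distrib_left[symmetric])
  moreover have "(\<Sum>x\<in>?A. ln (G x) * out x) \<le> (\<Sum>x\<in>?A. ln (t / E) * out x)"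
    by (rule sum_mono) (rule hi)
  then have "(\<Sum>x\<in>?A. ln (G x) * out x) \<le> ln (t / E)"
    using flux by (simp add: sum_distrib_left[symmetric])
  ultimately show "2 * (ln (G z0) - ln (t / E)) \<le> SS (Lv t)" "SS (Lv t) \<le> 2 * (ln (G z0) - ln t)"
    unfolding SSe by simp_all
qed

definition sG where "sG x = sqrt (G x)"
definition W where "W x = 2 * sG x * lp sG x"

lemma sG_sq: "sG x * sG x = G x" using G_nn[of x] by (simp add: sG_def)
lemma sG_pos: "sG x > 0" using G_pos[of x] by (simp add: sG_def)

lemma W_eq: "W x = ind x + (\<Sum>y\<in>nb x. b x y * (sG x - sG y)^2)"
proof -
  have "W x = (\<Sum>y\<in>nb x. b x y * (2 * sG x * (sG x - sG y)))"
    unfolding W_def lp_def by (simp add: sum_distrib_left algebra_simps)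
  also have "\<dots> = (\<Sum>y\<in>nb x. b x y * (G x - G y) + b x y * (sG x - sG y)^2)"
    by (rule sum.cong) (auto simp: power2_eq_square algebra_simps sG_sq[symmetric])
  also have "\<dots> = lp G x + (\<Sum>y\<in>nb x. b x y * (sG x - sG y)^2)"
    by (simp add: sum.distrib lp_def)
  finally show ?thesis by (simp add: lpG)
qed

lemma W_nn: "W x \<ge> 0"
  unfolding W_eq using ind_nn[of x] by (intro add_nonneg_nonneg sum_nonneg mult_nonneg_nonneg bnn) auto

lemma wG_W: "wG b z0 x * G x = W x"
proof -
  have "wG b z0 x = 2 * lp sG x / sG x"
    unfolding wG_def lap_eq by (simp add: sG_def[abs_def] G_def[symmetric])
  then show ?thesis using sG_pos[of x] unfolding W_def sG_sq[symmetric]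
    by (simp add: field_simps)
qed

lemma gsr:
  assumes S: "finite S" "\<And>x. \<psi> x \<noteq> 0 \<Longrightarrow> x \<in> S"
  shows "energy b (\<lambda>x. sG x * \<psi> x) = (\<Sum>x\<in>S. W x * (\<psi> x)^2)
     + (\<Sum>x\<in>nbhd S. \<Sum>y\<in>nbhd S. b x y * (sG x * sG y) * (\<psi> x - \<psi> y)^2)"
proof -
  let ?N = "nbhd S"
  have nz: "b x y * (sG x * \<psi> x - sG y * \<psi> y)^2 \<noteq> 0 \<Longrightarrow> b x y \<noteq> 0 \<and> (x \<in> S \<or> y \<in> S)" for x y
    using S(2) by (cases "\<psi> x = 0"; cases "\<psi> y = 0") auto
  have "energy b (\<lambda>x. sG x * \<psi> x) = (\<Sum>x\<in>?N. \<Sum>y\<in>?N. b x y * (sG x * \<psi> x - sG y * \<psi> y)^2)"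
    unfolding energy_def using pair_sum(1)[OF S(1), where t="\<lambda>x y. b x y * (sG x * \<psi> x - sG y * \<psi> y)^2", OF nz]
    by simp
  also have "\<dots> = (\<Sum>x\<in>?N. \<Sum>y\<in>?N. b x y * (sG x * sG y) * (\<psi> x - \<psi> y)^2)
      + ((\<Sum>x\<in>?N. \<Sum>y\<in>?N. b x y * ((\<psi> x)^2 * (G x - sG x * sG y)))
      + (\<Sum>x\<in>?N. \<Sum>y\<in>?N. b x y * ((\<psi> y)^2 * (G y - sG y * sG x))))"
    unfolding sum.distrib[symmetric]
    by (intro sum.cong refl) (simp add: power2_eq_square algebra_simps sG_sq[symmetric])
  also have "(\<Sum>x\<in>?N. \<Sum>y\<in>?N. b x y * ((\<psi> y)^2 * (G y - sG y * sG x)))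
      = (\<Sum>x\<in>?N. \<Sum>y\<in>?N. b x y * ((\<psi> x)^2 * (G x - sG x * sG y)))"
    by (rule swap_sum[symmetric])
  also have "(\<Sum>x\<in>?N. \<Sum>y\<in>?N. b x y * ((\<psi> x)^2 * (G x - sG x * sG y)))
      = (\<Sum>x\<in>?N. (\<psi> x)^2 * (sG x * (\<Sum>y\<in>?N. b x y * (sG x - sG y))))"
    by (rule sum.cong) (auto simp: sum_distrib_left algebra_simps sG_sq[symmetric])
  also have "\<dots> = (\<Sum>x\<in>S. (\<psi> x)^2 * (sG x * (\<Sum>y\<in>?N. b x y * (sG x - sG y))))"
    by (rule sum.mono_neutral_right) (use S fin_nbhd nbhd_sub in auto)
  also have "\<dots> = (\<Sum>x\<in>S. (\<psi> x)^2 * (sG x * lp sG x))"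
    by (rule sum.cong) (use lp_sum fin_nbhd[OF S(1)] nbhd_sub in auto)
  finally show ?thesis unfolding W_def by (simp add: sum_distrib_left algebra_simps)
qed

lemma b_le_dg: "b x y \<le> dg x"
proof (cases "b x y > 0")
  case True then show ?thesis unfolding dg_def
    by (intro member_le_sum) (use bnn fin_nb in \<open>auto simp: nb_def\<close>)
next
  case False then show ?thesis using dg_nn[of x] by simp
qed

lemma E_le1: "b x y > 0 \<Longrightarrow> E \<le> 1"
proof -
  assume bxy: "b x y > 0"
  have "E * b x y \<le> E * dg x" using b_le_dg[of x y] Epos by simp
  then have "E * b x y \<le> 1 * b x y" using ellE[OF bxy] by simp
  then show ?thesis using bxy by (rule mult_right_le_imp_le)
qed

definition hT :: "real \<Rightarrow> real \<Rightarrow> real" where "hT Tt s = max 0 (min 1 ((s + 2 * Tt) / Tt))"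
definition psi where "psi Tt x = hT Tt (ln (G x))"

lemma clamp_lip: "\<bar>max 0 (min 1 a) - max 0 (min 1 c)\<bar> \<le> \<bar>a - c\<bar>" for a c :: real
  by (simp add: max_def min_def abs_if) 

lemma psi_01: "0 \<le> psi Tt x" "psi Tt x \<le> 1"
  by (auto simp: psi_def hT_def)

lemma psi_supp: "Tt > 0 \<Longrightarrow> psi Tt x \<noteq> 0 \<Longrightarrow> x \<in> Lv (exp (- 2 * Tt))"
proof -
  assume Tt: "Tt > 0" "psi Tt x \<noteq> 0"
  then have "(ln (G x) + 2 * Tt) / Tt > 0" by (auto simp: psi_def hT_def max_def min_def split: if_splits)
  then have "ln (G x) > - 2 * Tt" using Tt by (simp add: divide_pos_pos zero_less_divide_iff)
  then have "exp (- 2 * Tt) < G x" using G_pos[of x] by (metis exp_less_mono exp_ln)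
  then show ?thesis by (simp add: Lv_def)
qed

lemma psi_one: "Tt > 0 \<Longrightarrow> x \<in> Lv (exp (- Tt)) \<Longrightarrow> psi Tt x = 1"
proof -
  assume Tt: "Tt > 0" "x \<in> Lv (exp (- Tt))"
  then have "- Tt \<le> ln (G x)" using G_pos[of x] by (simp add: Lv_def ln_ge_iff)
  then have "1 \<le> (ln (G x) + 2 * Tt) / Tt" using Tt by (simp add: field_simps)
  then show ?thesis by (simp add: psi_def hT_def)
qed

lemma psi_lip: "Tt > 0 \<Longrightarrow> \<bar>psi Tt x - psi Tt y\<bar> \<le> \<bar>ln (G x) - ln (G y)\<bar> / Tt"
proof -
  assume Tt: "Tt > 0"
  have "\<bar>psi Tt x - psi Tt y\<bar> \<le> \<bar>(ln (G x) + 2 * Tt) / Tt - (ln (G y) + 2 * Tt) / Tt\<bar>"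
    unfolding psi_def hT_def by (rule clamp_lip)
  also have "\<dots> = \<bar>ln (G x) - ln (G y)\<bar> / Tt" using Tt by (simp add: diff_divide_distrib[symmetric])
  finally show ?thesis .
qed

lemma psi_diff:
  assumes Tt: "Tt > 0" and d: "psi Tt x \<noteq> psi Tt y" and bxy: "b x y > 0"
  shows "x \<in> Lv (E * exp (- 2 * Tt))" "y \<in> Lv (E * exp (- 2 * Tt))"
proof -
  have E1: "E \<le> 1" by (rule E_le1[OF bxy])
  have byx: "b y x > 0" using bxy bsym by simp
  have h1: "E * G y \<le> G x" "E * G x \<le> G y" using harnack[OF bxy] harnack[OF byx] by auto
  have "psi Tt x \<noteq> 0 \<or> psi Tt y \<noteq> 0" using d by auto
  then have "exp (- 2 * Tt) \<le> G x \<or> exp (- 2 * Tt) \<le> G y" using psi_supp[OF Tt] by (auto simp: Lv_def)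
  moreover have ee: "E * exp (- 2 * Tt) \<le> exp (- 2 * Tt)" using E1 by simp
  moreover have em: "E * exp (- 2 * Tt) \<le> E * G z" if "exp (- 2 * Tt) \<le> G z" for z
    using that Epos by simp
  ultimately have "E * exp (- 2 * Tt) \<le> G x \<and> E * exp (- 2 * Tt) \<le> G y"
    using h1 ee em[of x] em[of y] by linarith
  then show "x \<in> Lv (E * exp (- 2 * Tt))" "y \<in> Lv (E * exp (- 2 * Tt))"
    by (auto simp: Lv_def)
qed

lemma term_H1: "E / 4 * (b x y * (G x - G y) * (ln (G x) - ln (G y))) \<le> b x y * (sG x - sG y)^2"
proof (cases "b x y > 0")
  case True
  have byx: "b y x > 0" using True bsym by simp
  have "(G x - G y) * (ln (G x) - ln (G y)) \<le> (4 / E) * (sG x - sG y)^2"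
    unfolding sG_def using H1[OF G_pos G_pos Epos harnack[OF byx] harnack[OF True]] .
  then have "E / 4 * ((G x - G y) * (ln (G x) - ln (G y))) \<le> E / 4 * ((4 / E) * (sG x - sG y)^2)"
    using Epos by (intro mult_left_mono) auto
  then have "E / 4 * ((G x - G y) * (ln (G x) - ln (G y))) \<le> (sG x - sG y)^2" using Epos by simp
  then have "b x y * (E / 4 * ((G x - G y) * (ln (G x) - ln (G y)))) \<le> b x y * (sG x - sG y)^2"
    using bnn by (intro mult_left_mono) auto
  then show ?thesis by (simp add: algebra_simps)
next
  case False then have "b x y = 0" using bnn[of x y] by simp
  then show ?thesis by simp
qed

lemma term_nn: "0 \<le> b x y * (G x - G y) * (ln (G x) - ln (G y))"
  using H0[OF G_pos G_pos, of x y] bnn[of x y] by (simp add: mult.assoc)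

lemma L_bound:
  assumes Tt: "Tt > 0" and S: "finite S" "\<And>x. psi Tt x \<noteq> 0 \<Longrightarrow> x \<in> S"
  shows "E / 4 * SS (Lv (exp (- Tt))) \<le> (\<Sum>x\<in>S. W x * (psi Tt x)^2)"
proof -
  let ?A = "Lv (exp (- Tt))"
  have AS: "?A \<subseteq> S" using psi_one[OF Tt] S(2) by fastforce
  have fA: "finite ?A" using AS S(1) finite_subset by blast
  have "(\<Sum>x\<in>?A. W x) = (\<Sum>x\<in>?A. W x * (psi Tt x)^2)" using psi_one[OF Tt] by simp
  also have "\<dots> \<le> (\<Sum>x\<in>S. W x * (psi Tt x)^2)"
    by (rule sum_mono2[OF S(1) AS]) (simp add: W_nn)
  finally have 1: "(\<Sum>x\<in>?A. W x) \<le> (\<Sum>x\<in>S. W x * (psi Tt x)^2)" .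
  have 2: "(\<Sum>y\<in>?A. b x y * (sG x - sG y)^2) \<le> W x" for x
  proof -
    have "(\<Sum>y\<in>?A. b x y * (sG x - sG y)^2) = (\<Sum>y\<in>?A \<inter> nb x. b x y * (sG x - sG y)^2)"
      by (rule sum.mono_neutral_right) (use fA b_zero in auto)
    also have "\<dots> \<le> (\<Sum>y\<in>nb x. b x y * (sG x - sG y)^2)"
      by (rule sum_mono2[OF fin_nb]) (auto intro: mult_nonneg_nonneg bnn)
    also have "\<dots> \<le> W x" unfolding W_eq using ind_nn[of x] by simp
    finally show ?thesis .
  qed
  have "E / 4 * SS ?A = (\<Sum>x\<in>?A. \<Sum>y\<in>?A. E / 4 * (b x y * (G x - G y) * (ln (G x) - ln (G y))))"
    unfolding SS_def by (simp add: sum_distrib_left)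
  also have "\<dots> \<le> (\<Sum>x\<in>?A. \<Sum>y\<in>?A. b x y * (sG x - sG y)^2)"
    by (intro sum_mono term_H1)
  also have "\<dots> \<le> (\<Sum>x\<in>?A. W x)" by (intro sum_mono 2)
  finally show ?thesis using 1 by linarith
qed

lemma R_bound:
  assumes Tt: "Tt > 0" and S: "finite S" "\<And>x. psi Tt x \<noteq> 0 \<Longrightarrow> x \<in> S"
    and fB: "finite (Lv (E * exp (- 2 * Tt)))"
  shows "(\<Sum>x\<in>nbhd S. \<Sum>y\<in>nbhd S. b x y * (sG x * sG y) * (psi Tt x - psi Tt y)^2)
         \<le> (1 / (E * Tt^2)) * SS (Lv (E * exp (- 2 * Tt)))"
proof -
  let ?B = "Lv (E * exp (- 2 * Tt))" and ?N = "nbhd S" and ?c = "1 / (E * Tt^2)"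
  define g where "g p = (if fst p \<in> ?B \<and> snd p \<in> ?B then
      ?c * (b (fst p) (snd p) * (G (fst p) - G (snd p)) * (ln (G (fst p)) - ln (G (snd p))))
      else 0)" for p
  have cpos: "?c > 0" using Epos Tt by simp
  have g_nn: "g p \<ge> 0" for p unfolding g_def using cpos term_nn by simp
  have tle: "b x y * (sG x * sG y) * (psi Tt x - psi Tt y)^2 \<le> g (x, y)" for x y
  proof (cases "b x y > 0 \<and> psi Tt x \<noteq> psi Tt y")
    case False
    then have "b x y * (sG x * sG y) * (psi Tt x - psi Tt y)^2 = 0" using bnn[of x y] by auto
    then show ?thesis using g_nn[of "(x,y)"] by linarith
  next
    case True
    then have bxy: "b x y > 0" and byx: "b y x > 0" using bsym by auto
    have xy: "x \<in> ?B" "y \<in> ?B" using psi_diff[OF Tt] True by auto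
    have "(psi Tt x - psi Tt y)^2 \<le> (\<bar>ln (G x) - ln (G y)\<bar> / Tt)^2"
      using psi_lip[OF Tt, of x y] by (metis abs_ge_zero power2_abs power_mono)
    also have "\<dots> = (ln (G x) - ln (G y))^2 / Tt^2" by (simp add: power_divide)
    finally have p: "(psi Tt x - psi Tt y)^2 \<le> (ln (G x) - ln (G y))^2 / Tt^2" .
    have sq: "sG x * sG y = sqrt (G x * G y)" by (simp add: sG_def real_sqrt_mult)
    have h2: "sqrt (G x * G y) * (ln (G x) - ln (G y))^2 \<le> (1 / E) * ((G x - G y) * (ln (G x) - ln (G y)))"
      by (rule H2[OF G_pos G_pos Epos harnack[OF byx] harnack[OF bxy]])
    have "b x y * (sG x * sG y) * (psi Tt x - psi Tt y)^2 \<le> b x y * (sG x * sG y) * ((ln (G x) - ln (G y))^2 / Tt^2)"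
      using p bnn[of x y] sG_pos[of x] sG_pos[of y] by (intro mult_left_mono) auto
    also have "\<dots> = (b x y / Tt^2) * (sqrt (G x * G y) * (ln (G x) - ln (G y))^2)"
      unfolding sq by simp
    also have "\<dots> \<le> (b x y / Tt^2) * ((1 / E) * ((G x - G y) * (ln (G x) - ln (G y))))"
      using h2 bnn[of x y] by (intro mult_left_mono) auto
    also have "\<dots> = g (x, y)" unfolding g_def using xy by (simp add: field_simps)
    finally show ?thesis .
  qed
  have fN: "finite ?N" using fin_nbhd[OF S(1)] .
  have "(\<Sum>x\<in>?N. \<Sum>y\<in>?N. b x y * (sG x * sG y) * (psi Tt x - psi Tt y)^2) \<le> (\<Sum>x\<in>?N. \<Sum>y\<in>?N. g (x, y))"
    by (intro sum_mono tle)
  also have "\<dots> = (\<Sum>p\<in>?N \<times> ?N. g p)" by (simp add: sum.cartesian_product)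
  also have "\<dots> \<le> (\<Sum>p\<in>(?N \<union> ?B) \<times> (?N \<union> ?B). g p)"
    by (rule sum_mono2) (use fN fB g_nn in auto)
  also have "\<dots> = (\<Sum>p\<in>?B \<times> ?B. g p)"
    by (rule sum.mono_neutral_right) (use fN fB in \<open>auto simp: g_def\<close>)
  also have "\<dots> = (\<Sum>x\<in>?B. \<Sum>y\<in>?B. g (x, y))" by (simp add: sum.cartesian_product)
  also have "\<dots> = ?c * SS ?B" unfolding SS_def g_def by (simp add: sum_distrib_left)
  finally show ?thesis .
qed

lemma aux_cancel: "(a::real) > 0 \<Longrightarrow> a * (K / a + 1) = K + a"
  by (simp add: field_simps)

lemma not_hardy:
  assumes prp: "\<And>t. t > 0 \<Longrightarrow> finite (Lv t)"
    and wpos: "\<And>x. w x > 0" and lam: "lam > 0" and fK: "finite K"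
    and wge: "\<And>x. x \<notin> K \<Longrightarrow> (1 + lam) * wG b z0 x \<le> w x"
  shows "\<not> hardy_weight b w"
proof
  assume hw: "hardy_weight b w"
  define M where "M = (\<Sum>x\<in>K. W x)"
  define c1 where "c1 = ln (G z0) + ln E"
  define c2 where "c2 = ln (G z0) - ln E"
  define K0 where "K0 = (2 / E) * (2 + \<bar>c2\<bar>) + (1 + lam) * M"
  define Q where "Q = K0 / (lam * E / 2) - c1 + 1"
  define Tt where "Tt = max 1 (max (- ln (G z0)) (max ((ln E - ln (G z0)) / 2) Q))"
  have T1: "Tt \<ge> 1" and T2: "Tt \<ge> - ln (G z0)" and T3: "Tt \<ge> (ln E - ln (G z0)) / 2" and T4: "Tt \<ge> Q"
    unfolding Tt_def by (simp_all only: max.coboundedI1 max.coboundedI2 order_refl)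
  have Tt: "Tt > 0" using T1 by simp
  have lE: "lam * E / 2 > 0" using lam Epos by simp
  define S where "S = Lv (exp (- 2 * Tt))"
  have fS: "finite S" unfolding S_def by (rule prp) simp
  have supp: "\<And>x. psi Tt x \<noteq> 0 \<Longrightarrow> x \<in> S" unfolding S_def using psi_supp[OF Tt] by blast
  define f where "f x = sG x * psi Tt x" for x
  have fsupp: "\<And>x. f x \<noteq> 0 \<Longrightarrow> x \<in> S" unfolding f_def using supp by auto
  have ffs: "fin_supp f" unfolding fin_supp_def using fS fsupp
    by (metis (mono_tags, lifting) finite_subset mem_Collect_eq subsetI)
  have hard: "(\<Sum>\<^sub>\<infinity>x. w x * (f x)^2) \<le> energy b f"
    using hw ffs by (auto simp: hardy_weight_def)
  have lhs: "(\<Sum>\<^sub>\<infinity>x. w x * (f x)^2) = (\<Sum>x\<in>S. w x * (f x)^2)"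
    by (rule infsum_fin1(1)[OF fS]) (use fsupp in auto)
  define R where "R = (\<Sum>x\<in>nbhd S. \<Sum>y\<in>nbhd S. b x y * (sG x * sG y) * (psi Tt x - psi Tt y)^2)"
  define SW where "SW = (\<Sum>x\<in>S. W x * (psi Tt x)^2)"
  have en: "energy b f = SW + R" unfolding f_def SW_def R_def by (rule gsr[OF fS supp])
  have pt: "(1 + lam) * (W x * (psi Tt x)^2 - (if x \<in> K then W x else 0)) \<le> w x * (f x)^2" for x
  proof (cases "x \<in> K")
    case True
    have "(psi Tt x)^2 \<le> 1" using psi_01[of Tt x] by (simp add: power_le_one)
    then have "W x * (psi Tt x)^2 - W x \<le> 0" using W_nn[of x] by (simp add: mult_left_le)
    then have "(1 + lam) * (W x * (psi Tt x)^2 - W x) \<le> 0" using lam by (simp add: mult_nonneg_nonpos)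
    moreover have "0 \<le> w x * (f x)^2" using wpos[of x] by simp
    ultimately show ?thesis using True by simp
  next
    case False
    have fx: "(f x)^2 = G x * (psi Tt x)^2" unfolding f_def using sG_sq[of x]
      by (simp add: power2_eq_square algebra_simps)
    have "(1 + lam) * wG b z0 x * (G x * (psi Tt x)^2) \<le> w x * (G x * (psi Tt x)^2)"
      using wge[OF False] G_nn[of x] by (intro mult_right_mono) (auto simp: algebra_simps)
    moreover have "(1 + lam) * (W x * (psi Tt x)^2) = (1 + lam) * wG b z0 x * (G x * (psi Tt x)^2)"
      unfolding wG_W[of x, symmetric] by (simp add: algebra_simps)
    ultimately have "(1 + lam) * (W x * (psi Tt x)^2) \<le> w x * (G x * (psi Tt x)^2)" by linarith
    then show ?thesis using False by (simp add: fx)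
  qed
  have sK: "(\<Sum>x\<in>S. (if x \<in> K then W x else 0)) \<le> M"
  proof -
    have "(\<Sum>x\<in>S. (if x \<in> K then W x else 0)) = (\<Sum>x\<in>S \<inter> K. W x)"
      by (simp add: sum.inter_restrict[OF fS])
    also have "\<dots> \<le> M" unfolding M_def by (rule sum_mono2[OF fK]) (auto simp: W_nn)
    finally show ?thesis .
  qed
  have "(1 + lam) * (SW - M) \<le> (1 + lam) * (SW - (\<Sum>x\<in>S. (if x \<in> K then W x else 0)))"
    using sK lam by (intro mult_left_mono) auto
  also have "\<dots> = (\<Sum>x\<in>S. (1 + lam) * (W x * (psi Tt x)^2 - (if x \<in> K then W x else 0)))"
    unfolding SW_def sum_subtractf[symmetric] sum_distrib_left ..
  also have "\<dots> \<le> (\<Sum>x\<in>S. w x * (f x)^2)" by (intro sum_mono pt)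
  finally have main: "(1 + lam) * (SW - M) \<le> SW + R" using hard lhs en by linarith
  have e1: "exp (- Tt) \<le> G z0"
  proof -
    have "exp (- Tt) \<le> exp (ln (G z0))" using T2 by simp
    then show ?thesis using G_pos[of z0] by simp
  qed
  have SWlow: "(E / 2) * (Tt + c1) \<le> SW"
  proof -
    have "E / 4 * SS (Lv (exp (- Tt))) \<le> SW" unfolding SW_def by (rule L_bound[OF Tt fS supp])
    moreover have "2 * (ln (G z0) - ln (exp (- Tt) / E)) \<le> SS (Lv (exp (- Tt)))"
      by (rule level_SS(1)) (use e1 prp in auto)
    moreover have "ln (exp (- Tt) / E) = - Tt - ln E" using Epos by (simp add: ln_div)
    ultimately have "2 * (ln (G z0) + Tt + ln E) \<le> SS (Lv (exp (- Tt)))" by simp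
    then have "E / 4 * (2 * (ln (G z0) + Tt + ln E)) \<le> E / 4 * SS (Lv (exp (- Tt)))"
      using Epos by (intro mult_left_mono) auto
    then have "E / 4 * (2 * (ln (G z0) + Tt + ln E)) \<le> SW"
      using \<open>E / 4 * SS (Lv (exp (- Tt))) \<le> SW\<close> by linarith
    then show ?thesis unfolding c1_def by (simp add: algebra_simps)
  qed
  have e2: "E * exp (- 2 * Tt) \<le> G z0"
  proof -
    have "ln E - 2 * Tt \<le> ln (G z0)" using T3 by simp
    then have "exp (ln E - 2 * Tt) \<le> exp (ln (G z0))" by simp
    then show ?thesis using G_pos[of z0] Epos by (simp add: exp_diff exp_minus field_simps)
  qed
  have Rup: "R \<le> (2 / E) * (2 + \<bar>c2\<bar>)"
  proof -
    have pB: "E * exp (- 2 * Tt) > 0" using Epos by simp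
    have "R \<le> (1 / (E * Tt^2)) * SS (Lv (E * exp (- 2 * Tt)))"
      unfolding R_def by (rule R_bound[OF Tt fS supp prp[OF pB]])
    also have "\<dots> \<le> (1 / (E * Tt^2)) * (2 * (ln (G z0) - ln (E * exp (- 2 * Tt))))"
      using level_SS(2)[OF pB e2 prp[OF pB]] Epos Tt by (intro mult_left_mono) auto
    also have "ln (E * exp (- 2 * Tt)) = ln E - 2 * Tt" using Epos by (simp add: ln_mult)
    also have "(1 / (E * Tt^2)) * (2 * (ln (G z0) - (ln E - 2 * Tt))) = (2 / E) * ((c2 + 2 * Tt) / Tt^2)"
      unfolding c2_def by (simp add: field_simps)
    also have "(c2 + 2 * Tt) / Tt^2 \<le> 2 + \<bar>c2\<bar>"
    proof -
      have "c2 / Tt^2 \<le> \<bar>c2\<bar>"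
      proof -
        have "Tt^2 \<ge> 1" using T1 by (simp add: one_le_power)
        then have "\<bar>c2\<bar> / Tt^2 \<le> \<bar>c2\<bar>" by (simp add: divide_le_eq mult_le_cancel_left1)
        moreover have "c2 / Tt^2 \<le> \<bar>c2\<bar> / Tt^2" using Tt by (intro divide_right_mono) auto
        ultimately show ?thesis by linarith
      qed
      moreover have "2 * Tt / Tt^2 \<le> 2" using T1 by (simp add: power2_eq_square divide_le_eq)
      ultimately show ?thesis by (simp add: add_divide_distrib)
    qed
    then have "(2 / E) * ((c2 + 2 * Tt) / Tt^2) \<le> (2 / E) * (2 + \<bar>c2\<bar>)"
      using Epos by (intro mult_left_mono) auto
    finally show ?thesis .
  qed
  have "lam * SW \<le> K0" using main Rup unfolding K0_def by (simp add: algebra_simps)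
  moreover have "lam * SW \<ge> lam * ((E / 2) * (Tt + c1))" using SWlow lam by (intro mult_left_mono) auto
  moreover have "lam * ((E / 2) * (Tt + c1)) > K0"
  proof -
    have "Tt + c1 \<ge> K0 / (lam * E / 2) + 1" using T4 unfolding Q_def by simp
    then have "(lam * E / 2) * (Tt + c1) \<ge> (lam * E / 2) * (K0 / (lam * E / 2) + 1)"
      using lE by (intro mult_left_mono) auto
    also have "(lam * E / 2) * (K0 / (lam * E / 2) + 1) = K0 + lam * E / 2"
      using lE by (rule aux_cancel)
    finally show ?thesis using lE by (simp add: algebra_simps)
  qed
  ultimately show False by linarith
qed

end


theorem mainTheorem1:
  fixes b :: "'a::countable \<Rightarrow> 'a \<Rightarrow> real" and E C p lam :: real
    and x0 :: 'a and \<rho> :: "'a \<Rightarrow> 'a \<Rightarrow> real" and w :: "'a \<Rightarrow> real" and K :: "'a set"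
  assumes "graph b" and "connected_graph b" and "transient b"
    and "E > 0" and "ellipticity b E"
    and "green_proper b x0"
    and "is_metric \<rho>"
    and "C > 0" and "p > 0"
    and "\<forall>x. wG b x0 x \<le> C / (1 + \<rho> x x0 powr p)"
    and "\<forall>x. w x > 0"
    and "lam > 0" and "finite K"
    and "\<forall>x. x \<notin> K \<longrightarrow> w x \<ge> (1 + lam) * (C / (1 + \<rho> x x0 powr p))"
  shows "\<not> hardy_weight b w"
proof -
  interpret lfot b E x0
    by unfold_locales (use assms in \<open>auto simp: transient_def\<close>)
  show ?thesis
  proof (rule not_hardy)
    fix t :: real assume t: "t > 0"
    have "Lv t = {x. green b x0 x \<ge> ereal t}" by (simp add: Lv_def green_G)
    then show "finite (Lv t)" using assms(6) t by (simp add: green_proper_def)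
  next
    fix x assume "x \<notin> K"
    then have "(1 + lam) * (C / (1 + \<rho> x x0 powr p)) \<le> w x" using assms(14) by blast
    moreover have "(1 + lam) * wG b x0 x \<le> (1 + lam) * (C / (1 + \<rho> x x0 powr p))"
      using assms(10,12) by (intro mult_left_mono) auto
    ultimately show "(1 + lam) * wG b x0 x \<le> w x" by linarith
  qed (use assms in auto)
qed

end
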